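(* Consider noisy group testing under reverse $Z$-channel noise with parameter $\rho\in(0,1)$, $k=\Theta(p^\theta)$ defectives with $\theta\in(0,1)$, and i.i.d. Bernoulli testing with parameter $\nu>0$. For fixed $\beta\in(\rho,1)$, consider the following noisy DD algorithm: (1) let $\widehat{\mathrm{PD}}$ be the set of items $j$ that appear in no negative test; (2) for $j\in\widehat{\mathrm{PD}}$ let $\tilde N_{\rm pos}(j)$ be the number of positive tests that contain $j$ and no other item of $\widehat{\mathrm{PD}}$, and output $\hat S=\{j\in\widehat{\mathrm{PD}}:\tilde N_{\rm pos}(j)\ge \beta n\nu e^{-\nu}/k\}$. Then for any $\beta\in(\rho,1)$ and $\xi\in(0,\theta)$, this algorithm achieves $P_e\to0$ as long as $n\ge n_{\rm DD}(1+\eta)$ for an arbitrarily small fixed $\eta>0$, where $n_{\rm DD}=\max\{n_1^{(ND)},n_2^{(D)},n_2^{(ND)}\}$ with $$n_1^{(ND)}=\frac{1-\xi}{(1-\rho)\nu e^{-\nu}}\,k\log p,\qquad n_2^{(D)}=\frac{1}{\nu e^{-\nu}D_1(\beta)}\,k\log k,\qquad n_2^{(ND)}=\frac{\xi}{\nu e^{-\nu}\rho D_1(\beta/\rho)}\,k\log p.$$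
   Context: Setup: $p$ items, unknown defective set $S$ uniform among size-$k$ subsets of $\{1,\dots,p\}$, $p\to\infty$. Test matrix $\mathbf X\in\{0,1\}^{n\times p}$ with i.i.d. Bernoulli$(\nu/k)$ entries ($X_{ij}=1$ iff item $j$ is in test $i$). Noiseless outcome $U_i=\bigvee_{j\in S}X_{ij}$; observed outcome $Y_i$ obtained by passing $U_i$ independently through the reverse $Z$-channel: $P(Y=1|U=0)=\rho$, $P(Y=0|U=0)=1-\rho$, $P(Y=1|U=1)=1$. Test $i$ is positive if $Y_i=1$ and negative if $Y_i=0$. $P_e=\mathbb P[\hat S\ne S]$. Natural logarithms. For $\gamma>0$ and $t\ge0$, $D_\gamma(t)=t\log(t/\gamma)-t+\gamma$. *)

theory Defs
  imports "HOL-Probability.Probability" "HOL-Library.Landau_Symbols"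
begin

text \<open>Items are indexed by 0..<p, tests by 0..<n.  A test matrix is X :: nat \<times> nat \<Rightarrow> bool,
  X (i,j) = True iff item j is in test i.\<close>

definition D_gamma :: "real \<Rightarrow> real \<Rightarrow> real" where
  "D_gamma \<gamma> t = t * ln (t / \<gamma>) - t + \<gamma>"

definition ksubsets :: "nat \<Rightarrow> nat \<Rightarrow> nat set set" where
  "ksubsets p k = {S. S \<subseteq> {..<p} \<and> card S = k}"

definition noiseless_outcome :: "nat set \<Rightarrow> (nat \<times> nat \<Rightarrow> bool) \<Rightarrow> nat \<Rightarrow> bool" where
  "noiseless_outcome S X i = (\<exists>j\<in>S. X (i, j))"

text \<open>Reverse Z-channel: Y = U or Z where Z_i ~ Bernoulli(rho) i.i.d. (flips 0 to 1 w.p. rho).\<close>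
definition observed_outcome :: "nat set \<Rightarrow> (nat \<times> nat \<Rightarrow> bool) \<Rightarrow> (nat \<Rightarrow> bool) \<Rightarrow> nat \<Rightarrow> bool" where
  "observed_outcome S X Z i = (noiseless_outcome S X i \<or> Z i)"

definition dd_PD :: "nat \<Rightarrow> nat \<Rightarrow> (nat \<times> nat \<Rightarrow> bool) \<Rightarrow> (nat \<Rightarrow> bool) \<Rightarrow> nat set" where
  "dd_PD p n X Y = {j. j < p \<and> (\<forall>i<n. X (i, j) \<longrightarrow> Y i)}"

definition dd_Npos :: "nat \<Rightarrow> nat \<Rightarrow> (nat \<times> nat \<Rightarrow> bool) \<Rightarrow> (nat \<Rightarrow> bool) \<Rightarrow> nat \<Rightarrow> nat" where
  "dd_Npos p n X Y j = card {i. i < n \<and> Y i \<and> X (i, j) \<and>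
      (\<forall>j'\<in>dd_PD p n X Y. j' \<noteq> j \<longrightarrow> \<not> X (i, j'))}"

definition dd_decode :: "nat \<Rightarrow> nat \<Rightarrow> nat \<Rightarrow> real \<Rightarrow> real \<Rightarrow> (nat \<times> nat \<Rightarrow> bool) \<Rightarrow> (nat \<Rightarrow> bool) \<Rightarrow> nat set" where
  "dd_decode p n k \<nu> \<beta> X Y = {j \<in> dd_PD p n X Y.
      real (dd_Npos p n X Y j) \<ge> \<beta> * real n * \<nu> * exp (- \<nu>) / real k}"

definition gt_model :: "nat \<Rightarrow> nat \<Rightarrow> nat \<Rightarrow> real \<Rightarrow> real \<Rightarrow>
    (nat set \<times> (nat \<times> nat \<Rightarrow> bool) \<times> (nat \<Rightarrow> bool)) pmf" where
  "gt_model p k n \<nu> \<rho> =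
     pair_pmf (pmf_of_set (ksubsets p k))
       (pair_pmf (Pi_pmf ({..<n} \<times> {..<p}) False (\<lambda>_. bernoulli_pmf (\<nu> / real k)))
                 (Pi_pmf {..<n} False (\<lambda>_. bernoulli_pmf \<rho>)))"

definition dd_error_prob :: "nat \<Rightarrow> nat \<Rightarrow> nat \<Rightarrow> real \<Rightarrow> real \<Rightarrow> real \<Rightarrow> real" where
  "dd_error_prob p k n \<nu> \<rho> \<beta> =
     measure_pmf.prob (gt_model p k n \<nu> \<rho>)
       {(S, X, Z). dd_decode p n k \<nu> \<beta> X (observed_outcome S X Z) \<noteq> S}"

definition n_DD :: "nat \<Rightarrow> nat \<Rightarrow> real \<Rightarrow> real \<Rightarrow> real \<Rightarrow> real \<Rightarrow> real" where
  "n_DD p k \<nu> \<rho> \<beta> \<xi> =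
     (let c = \<nu> * exp (- \<nu>);
          n1ND = (1 - \<xi>) / ((1 - \<rho>) * c) * real k * ln (real p);
          n2D = 1 / (c * D_gamma 1 \<beta>) * real k * ln (real k);
          n2ND = \<xi> / (c * \<rho> * D_gamma 1 (\<beta> / \<rho>)) * real k * ln (real p)
      in max n1ND (max n2D n2ND))"

end

theory Submission
  imports Defs
begin
lemma fin_set_Pi_bool:
  fixes p :: "'a \<Rightarrow> bool pmf"
  assumes "finite A"
  shows "finite (set_pmf (Pi_pmf A d p))"
proof -
  have "set_pmf (Pi_pmf A d p) \<subseteq> PiE_dflt A d (\<lambda>_. UNIV)"
    using set_Pi_pmf_subset'[OF assms, of d p] by (auto simp: PiE_dflt_def)
  moreover have "finite (PiE_dflt A d (\<lambda>_. (UNIV::bool set)))"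
    using assms by (intro finite_PiE_dflt) auto
  ultimately show ?thesis by (rule finite_subset)
qed

lemma exp_pair:
  fixes f :: "'a \<times> 'b \<Rightarrow> real"
  assumes "finite (set_pmf A)" "finite (set_pmf B)"
  shows "measure_pmf.expectation (pair_pmf A B) f =
         measure_pmf.expectation A (\<lambda>a. measure_pmf.expectation B (\<lambda>b. f (a, b)))"
proof -
  have "measure_pmf.expectation (pair_pmf A B) f = (\<Sum>ab\<in>set_pmf A \<times> set_pmf B. f ab * pmf (pair_pmf A B) ab)"
    using assms by (intro integral_measure_pmf_real) auto
  also have "\<dots> = (\<Sum>a\<in>set_pmf A. \<Sum>b\<in>set_pmf B. f (a,b) * (pmf A a * pmf B b))"
    by (subst sum.cartesian_product) (auto intro!: sum.cong simp: pmf_pair)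
  also have "\<dots> = (\<Sum>a\<in>set_pmf A. (\<Sum>b\<in>set_pmf B. f (a,b) * pmf B b) * pmf A a)"
    by (simp add: sum_distrib_right sum_distrib_left mult_ac)
  also have "\<dots> = measure_pmf.expectation A (\<lambda>a. measure_pmf.expectation B (\<lambda>b. f (a, b)))"
    using assms by (subst integral_measure_pmf_real[where A="set_pmf A"]) (auto simp: integral_measure_pmf_real[where A="set_pmf B"])
  finally show ?thesis .
qed

lemma exp_local:
  fixes p :: "'a \<Rightarrow> bool pmf" and g :: "('a \<Rightarrow> bool) \<Rightarrow> real"
  assumes "finite A" "B \<subseteq> A" "\<And>f f'. (\<And>x. x \<in> B \<Longrightarrow> f x = f' x) \<Longrightarrow> g f = g f'"
  shows "measure_pmf.expectation (Pi_pmf A d p) g = measure_pmf.expectation (Pi_pmf B d p) g"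
proof -
  have "Pi_pmf B d p = map_pmf (\<lambda>f x. if x \<in> B then f x else d) (Pi_pmf A d p)"
    using assms by (intro Pi_pmf_subset)
  then have "measure_pmf.expectation (Pi_pmf B d p) g =
      measure_pmf.expectation (Pi_pmf A d p) (\<lambda>f. g (\<lambda>x. if x \<in> B then f x else d))" by simp
  also have "\<dots> = measure_pmf.expectation (Pi_pmf A d p) g"
    by (intro Bochner_Integration.integral_cong refl assms(3)) auto
  finally show ?thesis ..
qed

lemma exp_split:
  fixes p :: "'a \<Rightarrow> bool pmf" and H :: "('a \<Rightarrow> bool) \<Rightarrow> real"
  assumes "finite A" "finite B" "A \<inter> B = {}"
  shows "measure_pmf.expectation (Pi_pmf (A \<union> B) d p) H =
    measure_pmf.expectation (Pi_pmf A d p) (\<lambda>f. measure_pmf.expectation (Pi_pmf B d p)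
        (\<lambda>g. H (\<lambda>x. if x \<in> A then f x else g x)))"
proof -
  have "measure_pmf.expectation (Pi_pmf (A \<union> B) d p) H =
     measure_pmf.expectation (pair_pmf (Pi_pmf A d p) (Pi_pmf B d p)) (\<lambda>(f,g). H (\<lambda>x. if x \<in> A then f x else g x))"
    by (subst Pi_pmf_union[OF assms]) (simp add: case_prod_unfold)
  also have "\<dots> = measure_pmf.expectation (Pi_pmf A d p) (\<lambda>f. measure_pmf.expectation (Pi_pmf B d p)
        (\<lambda>g. H (\<lambda>x. if x \<in> A then f x else g x)))"
    using assms by (subst exp_pair) (auto intro!: fin_set_Pi_bool)
  finally show ?thesis .
qed
lemma exp_block:
  fixes p :: "'a \<Rightarrow> bool pmf" and g :: "'b \<Rightarrow> ('a \<Rightarrow> bool) \<Rightarrow> real"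
  assumes "finite I" "finite A" "\<And>b. b \<in> I \<Longrightarrow> Bl b \<subseteq> A" "disjoint_family_on Bl I"
    "\<And>b f f'. b \<in> I \<Longrightarrow> (\<And>x. x \<in> Bl b \<Longrightarrow> f x = f' x) \<Longrightarrow> g b f = g b f'"
  shows "measure_pmf.expectation (Pi_pmf A d p) (\<lambda>f. \<Prod>b\<in>I. g b f) =
         (\<Prod>b\<in>I. measure_pmf.expectation (Pi_pmf A d p) (g b))"
  using assms
proof (induction I arbitrary: A rule: finite_induct)
  case empty
  then show ?case by simp
next
  case (insert b I)
  let ?E = "measure_pmf.expectation"
  let ?m = "\<lambda>f h x. if x \<in> Bl b then f x else h x"
  have Bb: "Bl b \<subseteq> A" using insert(5)[of b] by blast
  have A: "A = Bl b \<union> (A - Bl b)" using Bb by blast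
  have finB: "finite (Bl b)" using Bb insert(4) by (meson finite_subset)
  have dis: "Bl c \<subseteq> A - Bl b" if "c \<in> I" for c
    using insert(6) that insert(2,5) unfolding disjoint_family_on_def by fastforce
  have loc_b: "g b (?m f h) = g b f" for f h
    by (rule insert(7)) auto
  have loc_c: "g c (?m f h) = g c h" if "c \<in> I" for c f h
    by (rule insert(7)) (use dis[OF that] that in auto)
  have "?E (Pi_pmf A d p) (\<lambda>f. \<Prod>c\<in>insert b I. g c f) =
        ?E (Pi_pmf (Bl b \<union> (A - Bl b)) d p) (\<lambda>f. g b f * (\<Prod>c\<in>I. g c f))"
  proof -
    have e1: "(\<Prod>c\<in>insert b I. g c f) = g b f * (\<Prod>c\<in>I. g c f)" for f
      using insert(1,2) by (rule prod.insert)
    have e2: "Pi_pmf (Bl b \<union> (A - Bl b)) d p = Pi_pmf A d p" using A[symmetric] by (rule arg_cong)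
    show ?thesis unfolding e1 e2 ..
  qed
  also have "\<dots> = ?E (Pi_pmf (Bl b) d p) (\<lambda>f. ?E (Pi_pmf (A - Bl b) d p)
        (\<lambda>h. g b (?m f h) * (\<Prod>c\<in>I. g c (?m f h))))"
    by (rule exp_split[OF finB finite_Diff[OF insert(4)]]) blast
  also have "\<dots> = ?E (Pi_pmf (Bl b) d p) (\<lambda>f. ?E (Pi_pmf (A - Bl b) d p)
        (\<lambda>h. g b f * (\<Prod>c\<in>I. g c h)))"
    using loc_b loc_c by (intro Bochner_Integration.integral_cong refl prod.cong) auto
  also have "\<dots> = ?E (Pi_pmf (Bl b) d p) (\<lambda>f. g b f * ?E (Pi_pmf (A - Bl b) d p)
        (\<lambda>h. (\<Prod>c\<in>I. g c h)))"
    by simp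
  also have "\<dots> = ?E (Pi_pmf (Bl b) d p) (g b) * ?E (Pi_pmf (A - Bl b) d p) (\<lambda>h. (\<Prod>c\<in>I. g c h))"
    by simp
  also have "?E (Pi_pmf (A - Bl b) d p) (\<lambda>h. (\<Prod>c\<in>I. g c h)) = (\<Prod>c\<in>I. ?E (Pi_pmf (A - Bl b) d p) (g c))"
  proof (rule insert(3))
    show "finite (A - Bl b)" using insert(4) by blast
    show "\<And>c. c \<in> I \<Longrightarrow> Bl c \<subseteq> A - Bl b" by (rule dis)
    show "disjoint_family_on Bl I" using insert(6) unfolding disjoint_family_on_def by blast
    show "\<And>ba f f'. ba \<in> I \<Longrightarrow> (\<And>x. x \<in> Bl ba \<Longrightarrow> f x = f' x) \<Longrightarrow> g ba f = g ba f'"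
      using insert(7) by blast
  qed
  also have "\<dots> = (\<Prod>c\<in>I. ?E (Pi_pmf A d p) (g c))"
  proof (rule prod.cong[OF refl])
    fix c assume c: "c \<in> I"
    show "?E (Pi_pmf (A - Bl b) d p) (g c) = ?E (Pi_pmf A d p) (g c)"
    proof (rule exp_local[symmetric, OF insert(4)])
      show "A - Bl b \<subseteq> A" by blast
      fix f f' :: "'a \<Rightarrow> bool" assume h: "\<And>x. x \<in> A - Bl b \<Longrightarrow> f x = f' x"
      show "g c f = g c f'" by (rule insert(7)[OF insertI2[OF c]]) (use h dis[OF c] in blast)
    qed
  qed
  also have "?E (Pi_pmf (Bl b) d p) (g b) = ?E (Pi_pmf A d p) (g b)"
    by (rule exp_local[symmetric, OF insert(4) Bb]) (rule insert(7), auto)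
  finally show ?case by (simp only: prod.insert[OF insert(1,2)])
qed

lemma rect_prob:
  fixes Q :: "'a \<Rightarrow> bool pmf"
  assumes "finite U" "T \<subseteq> U" "F \<subseteq> U" "T \<inter> F = {}"
  shows "measure_pmf.prob (Pi_pmf U d Q) {W. (\<forall>c\<in>T. W c) \<and> (\<forall>c\<in>F. \<not> W c)} =
         (\<Prod>c\<in>T. pmf (Q c) True) * (\<Prod>c\<in>F. pmf (Q c) False)"
proof -
  define B where "B c = (if c \<in> T then {True} else if c \<in> F then {False} else UNIV)" for c
  have "{W. (\<forall>c\<in>T. W c) \<and> (\<forall>c\<in>F. \<not> W c)} = Pi U B"
    using assms(2,3,4) by (auto simp: B_def Pi_def split: if_splits)
  then have "measure_pmf.prob (Pi_pmf U d Q) {W. (\<forall>c\<in>T. W c) \<and> (\<forall>c\<in>F. \<not> W c)} =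
     (\<Prod>c\<in>U. measure_pmf.prob (Q c) (B c))"
    using assms(1) by (simp add: measure_Pi_pmf_Pi)
  also have "\<dots> = (\<Prod>c\<in>T \<union> F \<union> (U - T - F). measure_pmf.prob (Q c) (B c))"
    using assms by (intro prod.cong) auto
  also have "\<dots> = (\<Prod>c\<in>T. measure_pmf.prob (Q c) (B c)) * (\<Prod>c\<in>F. measure_pmf.prob (Q c) (B c))
      * (\<Prod>c\<in>U - T - F. measure_pmf.prob (Q c) (B c))"
  proof -
    have fT: "finite T" "finite F" "finite (U - T - F)" using assms finite_subset by auto
    have "(\<Prod>c\<in>T \<union> F \<union> (U - T - F). measure_pmf.prob (Q c) (B c)) =
       (\<Prod>c\<in>T \<union> F. measure_pmf.prob (Q c) (B c)) * (\<Prod>c\<in>U - T - F. measure_pmf.prob (Q c) (B c))"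
      using fT by (intro prod.union_disjoint) auto
    moreover have "(\<Prod>c\<in>T \<union> F. measure_pmf.prob (Q c) (B c)) =
       (\<Prod>c\<in>T. measure_pmf.prob (Q c) (B c)) * (\<Prod>c\<in>F. measure_pmf.prob (Q c) (B c))"
      using fT assms(4) by (intro prod.union_disjoint) auto
    ultimately show ?thesis by simp
  qed
  also have "(\<Prod>c\<in>U - T - F. measure_pmf.prob (Q c) (B c)) = 1"
    by (intro prod.neutral) (auto simp: B_def)
  also have "(\<Prod>c\<in>T. measure_pmf.prob (Q c) (B c)) = (\<Prod>c\<in>T. pmf (Q c) True)"
    by (intro prod.cong) (auto simp: B_def measure_pmf_single)
  also have "(\<Prod>c\<in>F. measure_pmf.prob (Q c) (B c)) = (\<Prod>c\<in>F. pmf (Q c) False)"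
    using assms(4) by (intro prod.cong) (auto simp: B_def measure_pmf_single)
  finally show ?thesis by simp
qed

lemma exp_mono_fin:
  fixes f g :: "'a \<Rightarrow> real"
  assumes "finite (set_pmf M)" "\<And>x. x \<in> set_pmf M \<Longrightarrow> f x \<le> g x"
  shows "measure_pmf.expectation M f \<le> measure_pmf.expectation M g"
  using assms by (intro integral_mono_AE integrable_measure_pmf_finite) (auto simp: AE_measure_pmf_iff)

lemma prob_le_exp:
  fixes f :: "'a \<Rightarrow> real"
  assumes "finite (set_pmf M)" "\<And>x. x \<in> set_pmf M \<Longrightarrow> f x \<ge> 0"
    "\<And>x. x \<in> set_pmf M \<Longrightarrow> x \<in> A \<Longrightarrow> f x \<ge> 1"
  shows "measure_pmf.prob M A \<le> measure_pmf.expectation M f"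
proof -
  have "measure_pmf.prob M A = measure_pmf.expectation M (indicator A)"
    by simp
  also have "\<dots> \<le> measure_pmf.expectation M f"
    using assms by (intro exp_mono_fin) (auto simp: indicator_def)
  finally show ?thesis .
qed

lemma exp_ind_fin:
  fixes f :: "'a \<Rightarrow> real"
  assumes "finite (set_pmf M)"
  shows "measure_pmf.expectation M (\<lambda>x. a + b * (if P x then 1 else 0)) = a + b * measure_pmf.prob M {x. P x}"
proof -
  have "measure_pmf.expectation M (\<lambda>x. a + b * (if P x then 1 else 0)) =
        measure_pmf.expectation M (\<lambda>x. a + b * indicator {x. P x} x)"
    by (intro Bochner_Integration.integral_cong) (auto simp: indicator_def)
  also have "\<dots> = a + b * measure_pmf.prob M {x. P x}"
    using assms by (subst Bochner_Integration.integral_add) (auto intro: integrable_measure_pmf_finite)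
  finally show ?thesis .
qed

definition QQ :: "nat \<Rightarrow> real \<Rightarrow> real \<Rightarrow> nat \<times> nat \<Rightarrow> bool pmf" where
  "QQ p x \<rho> c = (if snd c = p then bernoulli_pmf \<rho> else bernoulli_pmf x)"

definition UU :: "nat \<Rightarrow> nat \<Rightarrow> (nat \<times> nat) set" where
  "UU n p = {..<n} \<times> {..p}"

definition Psi :: "nat \<Rightarrow> (nat \<times> nat \<Rightarrow> bool) \<Rightarrow> (nat \<times> nat \<Rightarrow> bool) \<times> (nat \<Rightarrow> bool)" where
  "Psi p W = ((\<lambda>c. if snd c < p then W c else False), (\<lambda>i. W (i, p)))"

lemma model_eq:
  "pair_pmf (Pi_pmf ({..<n}\<times>{..<p}) False (\<lambda>_. bernoulli_pmf x)) (Pi_pmf {..<n} False (\<lambda>_. bernoulli_pmf \<rho>))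
   = map_pmf (Psi p) (Pi_pmf (UU n p) False (QQ p x \<rho>))"
proof -
  define A where "A = {..<n}\<times>{..<p}"
  define B where "B = {..<n}\<times>{p}"
  have U: "UU n p = A \<union> B" by (auto simp: UU_def A_def B_def)
  have fin: "finite A" "finite B" "A \<inter> B = {}" by (auto simp: A_def B_def)
  have "map_pmf (Psi p) (Pi_pmf (UU n p) False (QQ p x \<rho>)) =
        map_pmf (Psi p) (map_pmf (\<lambda>(f,g) x. if x \<in> A then f x else g x)
          (pair_pmf (Pi_pmf A False (QQ p x \<rho>)) (Pi_pmf B False (QQ p x \<rho>))))"
    unfolding U by (subst Pi_pmf_union[OF fin]) rule
  also have "\<dots> = map_pmf (\<lambda>(f,g). (f, \<lambda>i. g (i,p)))
          (pair_pmf (Pi_pmf A False (QQ p x \<rho>)) (Pi_pmf B False (QQ p x \<rho>)))"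
    unfolding pmf.map_comp
  proof (intro map_pmf_cong refl)
    fix fg assume "fg \<in> set_pmf (pair_pmf (Pi_pmf A False (QQ p x \<rho>)) (Pi_pmf B False (QQ p x \<rho>)))"
    then obtain f g where fg: "fg = (f,g)" "f \<in> set_pmf (Pi_pmf A False (QQ p x \<rho>))"
      "g \<in> set_pmf (Pi_pmf B False (QQ p x \<rho>))" by (cases fg) auto
    have f: "\<And>c. c \<notin> A \<Longrightarrow> f c = False" using set_Pi_pmf_subset[OF fin(1), of False "QQ p x \<rho>"] fg(2) by blast
    have g: "\<And>c. c \<notin> B \<Longrightarrow> g c = False" using set_Pi_pmf_subset[OF fin(2), of False "QQ p x \<rho>"] fg(3) by blast
    show "(Psi p \<circ> (\<lambda>(f, g) x. if x \<in> A then f x else g x)) fg = (\<lambda>(f, g). (f, \<lambda>i. g (i, p))) fg"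
      unfolding fg using f g by (auto simp: Psi_def fun_eq_iff A_def B_def)
  qed
  also have "\<dots> = pair_pmf (map_pmf id (Pi_pmf A False (QQ p x \<rho>))) (map_pmf (\<lambda>g i. g (i,p)) (Pi_pmf B False (QQ p x \<rho>)))"
    by (subst map_pair[symmetric]) (simp add: case_prod_unfold)
  also have "Pi_pmf A False (QQ p x \<rho>) = Pi_pmf A False (\<lambda>_. bernoulli_pmf x)"
    by (intro Pi_pmf_cong) (auto simp: QQ_def A_def)
  also have "Pi_pmf B False (QQ p x \<rho>) = Pi_pmf B False (\<lambda>_. bernoulli_pmf \<rho>)"
    by (intro Pi_pmf_cong) (auto simp: QQ_def B_def)
  also have "map_pmf (\<lambda>g i. g (i,p)) (Pi_pmf B False (\<lambda>_. bernoulli_pmf \<rho>)) = Pi_pmf {..<n} False (\<lambda>_. bernoulli_pmf \<rho>)"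
  proof -
    have "Pi_pmf {..<n} False (\<lambda>_. bernoulli_pmf \<rho>) = map_pmf (\<lambda>g. g \<circ> (\<lambda>i. (i,p))) (Pi_pmf B False (\<lambda>_. bernoulli_pmf \<rho>))"
      by (rule Pi_pmf_bij_betw) (auto simp: B_def bij_betw_def inj_on_def)
    then show ?thesis by (simp add: o_def)
  qed
  finally show ?thesis by (simp add: A_def)
qed

lemma err_bound:
  assumes K: "ksubsets p k \<noteq> {}"
  and bnd: "\<And>S. S \<in> ksubsets p k \<Longrightarrow> measure_pmf.prob (Pi_pmf (UU n p) False (QQ p (\<nu> / real k) \<rho>))
      {W. dd_decode p n k \<nu> \<beta> (fst (Psi p W)) (observed_outcome S (fst (Psi p W)) (snd (Psi p W))) \<noteq> S} \<le> b"
  shows "dd_error_prob p k n \<nu> \<rho> \<beta> \<le> b"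
proof -
  have finK: "finite (ksubsets p k)"
    by (rule finite_subset[of _ "Pow {..<p}"]) (auto simp: ksubsets_def)
  let ?M = "Pi_pmf (UU n p) False (QQ p (\<nu> / real k) \<rho>)"
  let ?Om = "pair_pmf (Pi_pmf ({..<n}\<times>{..<p}) False (\<lambda>_. bernoulli_pmf (\<nu> / real k))) (Pi_pmf {..<n} False (\<lambda>_. bernoulli_pmf \<rho>))"
  let ?E = "{(S, X, Z). dd_decode p n k \<nu> \<beta> X (observed_outcome S X Z) \<noteq> S}"
  have finO: "finite (set_pmf ?Om)" by (auto intro!: fin_set_Pi_bool)
  have finS: "finite (set_pmf (pmf_of_set (ksubsets p k)))" using finK K by simp
  have "dd_error_prob p k n \<nu> \<rho> \<beta> = measure_pmf.expectation (pair_pmf (pmf_of_set (ksubsets p k)) ?Om) (indicator ?E)"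
    unfolding dd_error_prob_def gt_model_def by simp
  also have "\<dots> = measure_pmf.expectation (pmf_of_set (ksubsets p k)) (\<lambda>S. measure_pmf.expectation ?Om (\<lambda>y. indicator ?E (S, y)))"
    by (rule exp_pair[OF finS finO])
  also have "\<dots> \<le> measure_pmf.expectation (pmf_of_set (ksubsets p k)) (\<lambda>S. b)"
  proof (rule exp_mono_fin[OF finS])
    fix S assume S: "S \<in> set_pmf (pmf_of_set (ksubsets p k))"
    have "measure_pmf.expectation ?Om (\<lambda>y. indicator ?E (S, y)) = measure_pmf.prob ?Om {(X, Z). dd_decode p n k \<nu> \<beta> X (observed_outcome S X Z) \<noteq> S}"
    proof -
      have "(\<lambda>y. indicator ?E (S, y)) = (indicator {(X, Z). dd_decode p n k \<nu> \<beta> X (observed_outcome S X Z) \<noteq> S} :: _ \<Rightarrow> real)"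
        by (auto simp: indicator_def fun_eq_iff)
      then show ?thesis by simp
    qed
    also have "\<dots> = measure_pmf.prob ?M {W. dd_decode p n k \<nu> \<beta> (fst (Psi p W)) (observed_outcome S (fst (Psi p W)) (snd (Psi p W))) \<noteq> S}"
      unfolding model_eq by (simp add: case_prod_unfold vimage_def)
    also have "\<dots> \<le> b" using bnd S K finK by simp
    finally show "measure_pmf.expectation ?Om (\<lambda>y. indicator ?E (S, y)) \<le> b" .
  qed
  also have "\<dots> = b" by simp
  finally show ?thesis .
qed

definition noS :: "nat set \<Rightarrow> (nat \<times> nat \<Rightarrow> bool) \<Rightarrow> nat \<Rightarrow> bool" where
  "noS S W i = (\<forall>j''\<in>S. \<not> W (i, j''))"

definition EA :: "nat \<Rightarrow> nat \<Rightarrow> nat set \<Rightarrow> real \<Rightarrow> (nat \<times> nat \<Rightarrow> bool) \<Rightarrow> nat \<Rightarrow> bool" where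
  "EA n p S T W j = (T \<le> real (card {i. i < n \<and> W (i, j) \<and> noS S W i}) \<and>
      (\<forall>i<n. W (i, j) \<and> noS S W i \<longrightarrow> W (i, p)))"

definition Cset :: "nat \<Rightarrow> nat set \<Rightarrow> (nat \<times> nat \<Rightarrow> bool) \<Rightarrow> nat \<Rightarrow> nat set" where
  "Cset n S W j = {i. i < n \<and> W (i, j) \<and> (\<forall>j''\<in>S - {j}. \<not> W (i, j''))}"

definition Wt :: "nat \<Rightarrow> nat \<Rightarrow> nat set \<Rightarrow> (nat \<times> nat \<Rightarrow> bool) \<Rightarrow> nat set" where
  "Wt n p S W = {j'. j' < p \<and> j' \<notin> S \<and> (\<forall>i<n. W (i, j') \<and> noS S W i \<longrightarrow> W (i, p))}"

definition Iset :: "nat \<Rightarrow> nat \<Rightarrow> nat set \<Rightarrow> (nat \<times> nat \<Rightarrow> bool) \<Rightarrow> nat \<Rightarrow> nat set" where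
  "Iset n p S W j = {i. i < n \<and> W (i, j) \<and> (\<exists>j'\<in>Wt n p S W. W (i, j'))}"

lemma det_incl:
  assumes S: "S \<subseteq> {..<p}"
    and Tab: "\<beta> * real n * \<nu> * exp (- \<nu>) / real k \<le> a - b"
    and err: "dd_decode p n k \<nu> \<beta> (fst (Psi p W)) (observed_outcome S (fst (Psi p W)) (snd (Psi p W))) \<noteq> S"
  shows "(\<exists>j<p. j \<notin> S \<and> EA n p S (\<beta> * real n * \<nu> * exp (- \<nu>) / real k) W j) \<or>
         (\<exists>j\<in>S. real (card (Cset n S W j)) < a) \<or>
         real (card (Wt n p S W)) > M \<or>
         (\<exists>j\<in>S. real (card (Iset n p S W j)) > b \<and> real (card (Wt n p S W)) \<le> M)"
proof -
  define X where "X = fst (Psi p W)"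
  define Y where "Y = observed_outcome S X (snd (Psi p W))"
  define T where "T = \<beta> * real n * \<nu> * exp (- \<nu>) / real k"
  have X: "X (i, j) = W (i, j)" if "j < p" for i j using that by (simp add: X_def Psi_def)
  have Y: "Y i = ((\<exists>j\<in>S. W (i, j)) \<or> W (i, p))" for i
    using S X by (auto simp: Y_def observed_outcome_def noiseless_outcome_def Psi_def X_def)
  have SPD: "S \<subseteq> dd_PD p n X Y"
    using S by (auto simp: dd_PD_def Y subset_iff X)
  have PDW: "dd_PD p n X Y - S \<subseteq> Wt n p S W"
    by (auto simp: dd_PD_def Wt_def X Y noS_def)
  have err': "dd_decode p n k \<nu> \<beta> X Y \<noteq> S" using err by (simp add: X_def Y_def)
  show ?thesis
  proof (cases "\<exists>j \<in> dd_decode p n k \<nu> \<beta> X Y. j \<notin> S")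
    case True
    then obtain j where j: "j \<in> dd_PD p n X Y" "j \<notin> S" "T \<le> real (dd_Npos p n X Y j)"
      by (auto simp: dd_decode_def T_def)
    have jp: "j < p" using j(1) by (simp add: dd_PD_def)
    have "{i. i < n \<and> Y i \<and> X (i, j) \<and> (\<forall>j'\<in>dd_PD p n X Y. j' \<noteq> j \<longrightarrow> \<not> X (i, j'))}
          \<subseteq> {i. i < n \<and> W (i, j) \<and> noS S W i}"
      using SPD j(2) S jp by (auto simp: noS_def X subset_iff)
    then have "dd_Npos p n X Y j \<le> card {i. i < n \<and> W (i, j) \<and> noS S W i}"
      unfolding dd_Npos_def by (intro card_mono) auto
    moreover have "\<forall>i<n. W (i, j) \<and> noS S W i \<longrightarrow> W (i, p)"
      using j(1) jp by (auto simp: dd_PD_def X Y noS_def)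
    ultimately have "EA n p S T W j" using j(3) unfolding EA_def by auto
    then show ?thesis using jp j(2) by (auto simp: T_def)
  next
    case False
    then have "dd_decode p n k \<nu> \<beta> X Y \<subseteq> S" by auto
    then obtain j where j: "j \<in> S" "j \<notin> dd_decode p n k \<nu> \<beta> X Y" using err' by blast
    then have Nlow: "real (dd_Npos p n X Y j) < T" using SPD by (auto simp: dd_decode_def T_def)
    have jp: "j < p" using j S by auto
    have sub: "Cset n S W j - Iset n p S W j \<subseteq>
       {i. i < n \<and> Y i \<and> X (i, j) \<and> (\<forall>j'\<in>dd_PD p n X Y. j' \<noteq> j \<longrightarrow> \<not> X (i, j'))}"
    proof
      fix i assume i: "i \<in> Cset n S W j - Iset n p S W j"
      have "\<not> X (i, j')" if "j' \<in> dd_PD p n X Y" "j' \<noteq> j" for j'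
      proof (cases "j' \<in> S")
        case True then show ?thesis using i that S by (auto simp: Cset_def X subset_iff)
      next
        case False then have "j' \<in> Wt n p S W" using PDW that by auto
        then show ?thesis using i by (auto simp: Iset_def Cset_def X Wt_def)
      qed
      then show "i \<in> {i. i < n \<and> Y i \<and> X (i, j) \<and> (\<forall>j'\<in>dd_PD p n X Y. j' \<noteq> j \<longrightarrow> \<not> X (i, j'))}"
        using i j(1) jp by (auto simp: Cset_def X Y)
    qed
    have "card (Cset n S W j) \<le> card (Cset n S W j - Iset n p S W j) + card (Iset n p S W j)"
    proof -
      have finC: "finite (Cset n S W j)" "finite (Iset n p S W j)"
        by (rule finite_subset[of _ "{..<n}"], auto simp: Cset_def Iset_def)+
      have "card (Cset n S W j) \<le> card ((Cset n S W j - Iset n p S W j) \<union> Iset n p S W j)"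
        using finC by (intro card_mono) auto
      also have "\<dots> \<le> card (Cset n S W j - Iset n p S W j) + card (Iset n p S W j)"
        by (rule card_Un_le)
      finally show ?thesis .
    qed
    moreover have "card (Cset n S W j - Iset n p S W j) \<le> dd_Npos p n X Y j"
      unfolding dd_Npos_def by (intro card_mono[OF _ sub]) auto
    ultimately have "real (card (Cset n S W j)) < T + real (card (Iset n p S W j))"
      using Nlow by linarith
    then have "real (card (Cset n S W j)) < a \<or> real (card (Iset n p S W j)) > b"
      using Tab by (auto simp: T_def)
    then show ?thesis using j(1) by (cases "real (card (Wt n p S W)) > M") auto
  qed
qed

lemma exp_ind2:
  fixes a b c :: real
  assumes "finite (set_pmf M)"
  shows "measure_pmf.expectation M (\<lambda>x. a + b * (if P x then 1 else 0) + c * (if R x then 1 else 0)) =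
     a + b * measure_pmf.prob M {x. P x} + c * measure_pmf.prob M {x. R x}"
proof -
  have "measure_pmf.expectation M (\<lambda>x. a + b * (if P x then 1 else 0) + c * (if R x then 1 else 0)) =
        measure_pmf.expectation M (\<lambda>x. a + b * indicator {x. P x} x + c * indicator {x. R x} x)"
    by (intro Bochner_Integration.integral_cong) (auto simp: indicator_def)
  also have "\<dots> = a + b * measure_pmf.prob M {x. P x} + c * measure_pmf.prob M {x. R x}"
    using assms by (subst Bochner_Integration.integral_add, auto intro: integrable_measure_pmf_finite,
        subst Bochner_Integration.integral_add, auto intro: integrable_measure_pmf_finite)
  finally show ?thesis .
qed

lemma exp_rows:
  fixes h :: "nat \<Rightarrow> (nat \<times> nat \<Rightarrow> bool) \<Rightarrow> real"
  assumes "\<And>i W W'. i < n \<Longrightarrow> (\<And>j. j \<le> p \<Longrightarrow> W (i, j) = W' (i, j)) \<Longrightarrow> h i W = h i W'"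
  shows "measure_pmf.expectation (Pi_pmf (UU n p) False Q) (\<lambda>W. \<Prod>i<n. h i W) =
         (\<Prod>i<n. measure_pmf.expectation (Pi_pmf (UU n p) False Q) (h i))"
proof (rule exp_block[where Bl = "\<lambda>i. {i} \<times> {..p}"])
  show "finite (UU n p)" by (simp add: UU_def)
  show "disjoint_family_on (\<lambda>i. {i} \<times> {..p}) {..<n}" by (auto simp: disjoint_family_on_def)
  show "\<And>b. b \<in> {..<n} \<Longrightarrow> {b} \<times> {..p} \<subseteq> UU n p" by (auto simp: UU_def)
  fix b :: nat and f f' :: "nat \<times> nat \<Rightarrow> bool" assume b: "b \<in> {..<n}" and h: "\<And>x. x \<in> {b} \<times> {..p} \<Longrightarrow> f x = f' x"
  show "h b f = h b f'" by (rule assms) (use b h in auto)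
qed simp

lemma pmfQ_T: "j < p \<Longrightarrow> 0 \<le> x \<Longrightarrow> x \<le> 1 \<Longrightarrow> pmf (QQ p x \<rho> (i, j)) True = x"
  by (simp add: QQ_def)
lemma pmfQ_F: "j < p \<Longrightarrow> 0 \<le> x \<Longrightarrow> x \<le> 1 \<Longrightarrow> pmf (QQ p x \<rho> (i, j)) False = 1 - x"
  by (simp add: QQ_def)
lemma pmfQ_Tp: "0 \<le> \<rho> \<Longrightarrow> \<rho> \<le> 1 \<Longrightarrow> pmf (QQ p x \<rho> (i, p)) True = \<rho>"
  by (simp add: QQ_def)
lemma pmfQ_Fp: "0 \<le> \<rho> \<Longrightarrow> \<rho> \<le> 1 \<Longrightarrow> pmf (QQ p x \<rho> (i, p)) False = 1 - \<rho>"
  by (simp add: QQ_def)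

lemma prod_rowF:
  assumes "S' \<subseteq> {..<p}" "finite S'" "0 \<le> x" "x \<le> 1"
  shows "(\<Prod>c\<in>{i} \<times> S'. pmf (QQ p x \<rho> c) False) = (1 - x) ^ card S'"
proof -
  have "(\<Prod>c\<in>{i} \<times> S'. pmf (QQ p x \<rho> c) False) = (\<Prod>j\<in>S'. pmf (QQ p x \<rho> (i, j)) False)"
  proof -
    have "{i} \<times> S' = (\<lambda>j. (i, j)) ` S'" by auto
    then show ?thesis by (simp add: prod.reindex inj_on_def)
  qed
  also have "\<dots> = (\<Prod>j\<in>S'. 1 - x)"
    using assms by (intro prod.cong) (auto simp: pmfQ_F)
  finally show ?thesis by simp
qed

lemma finM: "finite (set_pmf (Pi_pmf (UU n p) False (QQ p x \<rho>)))"
  by (intro fin_set_Pi_bool) (simp add: UU_def)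

lemma prod_if_pow:
  fixes s :: real
  assumes "finite A"
  shows "(\<Prod>i\<in>A. if P i then s else 1) = s ^ card {i\<in>A. P i}"
proof -
  have "(\<Prod>i\<in>A. if P i then s else 1) = (\<Prod>i\<in>{i\<in>A. P i}. s)"
    using assms by (subst prod.inter_filter[symmetric]) auto
  then show ?thesis by simp
qed

lemma rowprob:
  assumes "i < n" "T \<subseteq> {i} \<times> {..p}" "F \<subseteq> {i} \<times> {..p}" "T \<inter> F = {}"
    "\<And>W. P W \<longleftrightarrow> (\<forall>c\<in>T. W c) \<and> (\<forall>c\<in>F. \<not> W c)"
  shows "measure_pmf.prob (Pi_pmf (UU n p) False Q) {W. P W} = (\<Prod>c\<in>T. pmf (Q c) True) * (\<Prod>c\<in>F. pmf (Q c) False)"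
proof -
  have "{W. P W} = {W. (\<forall>c\<in>T. W c) \<and> (\<forall>c\<in>F. \<not> W c)}" using assms(5) by auto
  moreover have "T \<subseteq> UU n p" "F \<subseteq> UU n p" using assms(1,2,3) by (auto simp: UU_def)
  ultimately show ?thesis using assms(4) by (simp add: rect_prob UU_def)
qed

lemma boundA:
  assumes S: "S \<subseteq> {..<p}" "card S = k" and j: "j < p" "j \<notin> S"
    and x: "0 \<le> x" "x \<le> 1" and r: "0 \<le> \<rho>" "\<rho> \<le> 1" and s: "1 \<le> s"
  shows "measure_pmf.prob (Pi_pmf (UU n p) False (QQ p x \<rho>)) {W. EA n p S T W j}
     \<le> (1 - x * (1 - x) ^ k + x * (1 - x) ^ k * \<rho> * s) ^ n / s powr T"
proof -
  let ?M = "Pi_pmf (UU n p) False (QQ p x \<rho>)"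
  let ?E = "measure_pmf.expectation ?M"
  have finS: "finite S" using S(1) finite_subset by blast
  define g where "g i W = 1 + (s - 1) * (if W (i, j) \<and> noS S W i \<and> W (i, p) then 1 else 0)
     + (-1) * (if W (i, j) \<and> noS S W i \<and> \<not> W (i, p) then 1 else 0)" for i W
  have g_alt: "g i W = (if W (i, j) \<and> noS S W i then (if W (i, p) then s else 0) else 1)" for i W
    by (auto simp: g_def)
  have gnn: "g i W \<ge> 0" for i W using s by (auto simp: g_alt)
  define f where "f W = (\<Prod>i<n. g i W)" for W
  have "measure_pmf.prob ?M {W. EA n p S T W j} \<le> ?E (\<lambda>W. f W / s powr T)"
  proof (rule prob_le_exp[OF finM])
    fix W show "0 \<le> f W / s powr T" unfolding f_def using gnn by (intro divide_nonneg_nonneg prod_nonneg) auto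
  next
    fix W assume "W \<in> {W. EA n p S T W j}"
    then have EA: "T \<le> real (card {i. i < n \<and> W (i, j) \<and> noS S W i})"
        "\<And>i. i < n \<Longrightarrow> W (i, j) \<and> noS S W i \<Longrightarrow> W (i, p)" by (auto simp: EA_def)
    have "f W = (\<Prod>i<n. if W (i, j) \<and> noS S W i then s else 1)"
      unfolding f_def g_alt using EA(2) by (intro prod.cong) auto
    also have "\<dots> = s ^ card {i \<in> {..<n}. W (i, j) \<and> noS S W i}" by (rule prod_if_pow) simp
    also have "\<dots> = s powr real (card {i. i < n \<and> W (i, j) \<and> noS S W i})"
      using s by (simp add: powr_realpow)
    finally have "f W \<ge> s powr T" using s EA(1) by (simp add: powr_mono)
    then show "1 \<le> f W / s powr T" using s by simp
  qed
  also have "\<dots> = ?E f / s powr T" by simp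
  also have "?E f = (\<Prod>i<n. ?E (g i))"
    unfolding f_def
  proof (rule exp_rows)
    fix i :: nat and W W' :: "nat \<times> nat \<Rightarrow> bool" assume h: "\<And>j. j \<le> p \<Longrightarrow> W (i, j) = W' (i, j)"
    have "\<forall>j''\<in>S. W (i, j'') = W' (i, j'')" using h S(1) by (auto simp: subset_iff less_imp_le)
    then have "noS S W i = noS S W' i" by (auto simp: noS_def)
    then show "g i W = g i W'" using h[of j] h[of p] j by (simp add: g_def)
  qed
  also have "\<dots> = (\<Prod>i<n. 1 - x * (1 - x) ^ k + x * (1 - x) ^ k * \<rho> * s)"
  proof (rule prod.cong[OF refl])
    fix i assume i: "i \<in> {..<n}"
    have P1: "measure_pmf.prob ?M {W. W (i, j) \<and> noS S W i \<and> W (i, p)} = (x * \<rho>) * (1 - x) ^ k"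
    proof -
      have "measure_pmf.prob ?M {W. W (i, j) \<and> noS S W i \<and> W (i, p)} =
        (\<Prod>c\<in>{(i,j), (i,p)}. pmf (QQ p x \<rho> c) True) * (\<Prod>c\<in>{i} \<times> S. pmf (QQ p x \<rho> c) False)"
        using i j S by (intro rowprob) (auto simp: noS_def)
      also have "\<dots> = (x * \<rho>) * (1 - x) ^ k" using j x r S finS by (simp add: prod_rowF pmfQ_T pmfQ_Tp)
      finally show ?thesis .
    qed
    have P2: "measure_pmf.prob ?M {W. W (i, j) \<and> noS S W i \<and> \<not> W (i, p)} = x * ((1 - \<rho>) * (1 - x) ^ k)"
    proof -
      have "measure_pmf.prob ?M {W. W (i, j) \<and> noS S W i \<and> \<not> W (i, p)} =
        (\<Prod>c\<in>{(i,j)}. pmf (QQ p x \<rho> c) True) * (\<Prod>c\<in>insert (i,p) ({i} \<times> S). pmf (QQ p x \<rho> c) False)"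
        using i j S by (intro rowprob) (auto simp: noS_def)
      also have "\<dots> = x * ((1 - \<rho>) * (1 - x) ^ k)"
      proof -
        have "(i,p) \<notin> {i} \<times> S" using S(1) by auto
        then show ?thesis using j x r S finS by (simp add: prod_rowF pmfQ_T pmfQ_Fp)
      qed
      finally show ?thesis .
    qed
    show "?E (g i) = 1 - x * (1 - x) ^ k + x * (1 - x) ^ k * \<rho> * s"
      unfolding g_def by (subst exp_ind2[OF finM]) (simp add: P1 P2 algebra_simps)
  qed
  also have "\<dots> = (1 - x * (1 - x) ^ k + x * (1 - x) ^ k * \<rho> * s) ^ n" by simp
  finally show ?thesis by simp
qed

lemma boundC:
  assumes S: "S \<subseteq> {..<p}" "card S = k" and j: "j \<in> S"
    and x: "0 \<le> x" "x \<le> 1" and r: "0 \<le> \<rho>" "\<rho> \<le> 1" and s: "0 < s" "s \<le> 1"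
  shows "measure_pmf.prob (Pi_pmf (UU n p) False (QQ p x \<rho>)) {W. real (card (Cset n S W j)) < a}
     \<le> (1 - x * (1 - x) ^ (k - 1) + x * (1 - x) ^ (k - 1) * s) ^ n / s powr a"
proof -
  let ?M = "Pi_pmf (UU n p) False (QQ p x \<rho>)"
  let ?E = "measure_pmf.expectation ?M"
  have finS: "finite S" using S(1) finite_subset by blast
  have jp: "j < p" using j S by auto
  define g where "g (i::nat) (W::nat\<times>nat\<Rightarrow>bool) = 1 + (s - 1) * (if W (i, j) \<and> (\<forall>j''\<in>S - {j}. \<not> W (i, j'')) then 1 else 0)" for i W
  have g_alt: "g i W = (if W (i, j) \<and> (\<forall>j''\<in>S - {j}. \<not> W (i, j'')) then s else 1)" for i W
    by (auto simp: g_def)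
  have gnn: "g i W \<ge> 0" for i W using s by (auto simp: g_alt)
  define f where "f W = (\<Prod>i<n. g i W)" for W
  have "measure_pmf.prob ?M {W. real (card (Cset n S W j)) < a} \<le> ?E (\<lambda>W. f W / s powr a)"
  proof (rule prob_le_exp[OF finM])
    fix W show "0 \<le> f W / s powr a" unfolding f_def using gnn by (intro divide_nonneg_nonneg prod_nonneg) auto
  next
    fix W assume "W \<in> {W. real (card (Cset n S W j)) < a}"
    then have C: "real (card (Cset n S W j)) < a" by simp
    have "f W = s ^ card {i \<in> {..<n}. W (i, j) \<and> (\<forall>j''\<in>S - {j}. \<not> W (i, j''))}"
      unfolding f_def g_alt by (rule prod_if_pow) simp
    also have "\<dots> = s powr real (card (Cset n S W j))"
      using s by (simp add: powr_realpow Cset_def)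
    finally have "f W \<ge> s powr a" using s C by (simp add: powr_mono')
    then show "1 \<le> f W / s powr a" using s by simp
  qed
  also have "\<dots> = ?E f / s powr a" by simp
  also have "?E f = (\<Prod>i<n. ?E (g i))"
    unfolding f_def
  proof (rule exp_rows)
    fix i :: nat and W W' :: "nat \<times> nat \<Rightarrow> bool" assume h: "\<And>j. j \<le> p \<Longrightarrow> W (i, j) = W' (i, j)"
    have "\<forall>j''\<in>S. W (i, j'') = W' (i, j'')" using h S(1) by (auto simp: subset_iff less_imp_le)
    then show "g i W = g i W'" using h[of j] jp by (simp add: g_def)
  qed
  also have "\<dots> = (\<Prod>i<n. 1 - x * (1 - x) ^ (k - 1) + x * (1 - x) ^ (k - 1) * s)"
  proof (rule prod.cong[OF refl])
    fix i assume i: "i \<in> {..<n}"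
    have P1: "measure_pmf.prob ?M {W. W (i, j) \<and> (\<forall>j''\<in>S - {j}. \<not> W (i, j''))} = x * (1 - x) ^ (k - 1)"
    proof -
      have "measure_pmf.prob ?M {W. W (i, j) \<and> (\<forall>j''\<in>S - {j}. \<not> W (i, j''))} =
        (\<Prod>c\<in>{(i,j)}. pmf (QQ p x \<rho> c) True) * (\<Prod>c\<in>{i} \<times> (S - {j}). pmf (QQ p x \<rho> c) False)"
        using i j S by (intro rowprob) auto
      also have "\<dots> = x * (1 - x) ^ (k - 1)"
      proof -
        have "(\<Prod>c\<in>{i} \<times> (S - {j}). pmf (QQ p x \<rho> c) False) = (1 - x) ^ card (S - {j})"
          using S finS x by (intro prod_rowF) auto
        then show ?thesis using jp x S finS j by (simp add: pmfQ_T)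
      qed
      finally show ?thesis .
    qed
    show "?E (g i) = 1 - x * (1 - x) ^ (k - 1) + x * (1 - x) ^ (k - 1) * s"
      unfolding g_def by (subst exp_ind_fin[OF finM]) (simp add: P1 algebra_simps)
  qed
  also have "\<dots> = (1 - x * (1 - x) ^ (k - 1) + x * (1 - x) ^ (k - 1) * s) ^ n" by simp
  finally show ?thesis by simp
qed

lemma boundW:
  assumes S: "S \<subseteq> {..<p}" "card S = k"
    and x: "0 \<le> x" "x \<le> 1" and r: "0 \<le> \<rho>" "\<rho> \<le> 1" and M: "M > 0"
  shows "measure_pmf.prob (Pi_pmf (UU n p) False (QQ p x \<rho>)) {W. real (card (Wt n p S W)) > M}
     \<le> real p * (1 - x * (1 - x) ^ k * (1 - \<rho>)) ^ n / M"
proof -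
  let ?M = "Pi_pmf (UU n p) False (QQ p x \<rho>)"
  let ?E = "measure_pmf.expectation ?M"
  have finS: "finite S" using S(1) finite_subset by blast
  define Ev where "Ev j' W = (\<forall>i<n. W (i, j') \<and> noS S W i \<longrightarrow> W (i, p))" for j' W
  have cardW: "real (card (Wt n p S W)) = (\<Sum>j'\<in>{..<p} - S. if Ev j' W then 1 else 0)" for W
  proof -
    have "Wt n p S W = {j' \<in> {..<p} - S. Ev j' W}" by (auto simp: Wt_def Ev_def)
    then have "Wt n p S W = ({..<p} - S) \<inter> {j'. Ev j' W}" by auto
    then show ?thesis by (simp add: sum.If_cases[OF finite_Diff[OF finite_lessThan]])
  qed
  have "measure_pmf.prob ?M {W. real (card (Wt n p S W)) > M} \<le> ?E (\<lambda>W. real (card (Wt n p S W)) / M)"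
    using M by (intro prob_le_exp[OF finM]) auto
  also have "\<dots> = ?E (\<lambda>W. real (card (Wt n p S W))) / M" by simp
  also have "?E (\<lambda>W. real (card (Wt n p S W))) = (\<Sum>j'\<in>{..<p} - S. ?E (\<lambda>W. if Ev j' W then 1 else 0))"
    unfolding cardW by (intro Bochner_Integration.integral_sum integrable_measure_pmf_finite finM)
  also have "\<dots> = (\<Sum>j'\<in>{..<p} - S. (1 - x * (1 - x) ^ k * (1 - \<rho>)) ^ n)"
  proof (rule sum.cong[OF refl])
    fix j' assume j': "j' \<in> {..<p} - S"
    define g where "g (i::nat) (W::nat\<times>nat\<Rightarrow>bool) = (1::real) + (-1) * (if W (i, j') \<and> noS S W i \<and> \<not> W (i, p) then 1 else 0)" for i W
    have "?E (\<lambda>W. if Ev j' W then 1 else 0) = ?E (\<lambda>W. \<Prod>i<n. g i W)"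
    proof (intro Bochner_Integration.integral_cong refl)
      fix W
      show "(if Ev j' W then 1 else 0) = (\<Prod>i<n. g i W)"
      proof (cases "Ev j' W")
        case True
        then have "g i W = 1" if "i < n" for i using that by (auto simp: Ev_def g_def)
        then show ?thesis using True by simp
      next
        case False then obtain i where i: "i < n" "W (i, j') \<and> noS S W i \<and> \<not> W (i, p)" by (auto simp: Ev_def)
        then have "g i W = 0" by (simp add: g_def)
        then have "(\<Prod>i<n. g i W) = 0" using i(1) by (intro prod_zero) auto
        then show ?thesis using False by simp
      qed
    qed
    also have "\<dots> = (\<Prod>i<n. ?E (g i))"
    proof (rule exp_rows)
      fix i :: nat and W W' :: "nat \<times> nat \<Rightarrow> bool" assume h: "\<And>j. j \<le> p \<Longrightarrow> W (i, j) = W' (i, j)"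
      have "\<forall>j''\<in>S. W (i, j'') = W' (i, j'')" using h S(1) by (auto simp: subset_iff less_imp_le)
      then have "noS S W i = noS S W' i" by (auto simp: noS_def)
      then show "g i W = g i W'" using h[of j'] h[of p] j' by (simp add: g_def)
    qed
    also have "\<dots> = (\<Prod>i<n. 1 - x * (1 - x) ^ k * (1 - \<rho>))"
    proof (rule prod.cong[OF refl])
      fix i assume i: "i \<in> {..<n}"
      have P2: "measure_pmf.prob ?M {W. W (i, j') \<and> noS S W i \<and> \<not> W (i, p)} = x * ((1 - \<rho>) * (1 - x) ^ k)"
      proof -
        have "measure_pmf.prob ?M {W. W (i, j') \<and> noS S W i \<and> \<not> W (i, p)} =
          (\<Prod>c\<in>{(i,j')}. pmf (QQ p x \<rho> c) True) * (\<Prod>c\<in>insert (i,p) ({i} \<times> S). pmf (QQ p x \<rho> c) False)"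
          using i j' S by (intro rowprob) (auto simp: noS_def)
        also have "\<dots> = x * ((1 - \<rho>) * (1 - x) ^ k)"
        proof -
          have "(i,p) \<notin> {i} \<times> S" using S(1) by auto
          then show ?thesis using j' x r S finS by (simp add: prod_rowF pmfQ_T pmfQ_Fp)
        qed
        finally show ?thesis .
      qed
      show "?E (g i) = 1 - x * (1 - x) ^ k * (1 - \<rho>)"
        unfolding g_def by (subst exp_ind_fin[OF finM]) (simp add: P2 algebra_simps)
    qed
    finally show "?E (\<lambda>W. if Ev j' W then 1 else 0) = (1 - x * (1 - x) ^ k * (1 - \<rho>)) ^ n" by simp
  qed
  also have "\<dots> \<le> real p * (1 - x * (1 - x) ^ k * (1 - \<rho>)) ^ n"
  proof -
    have "0 \<le> 1 - x * (1 - x) ^ k * (1 - \<rho>)"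
    proof -
      have "x * (1 - x) ^ k * (1 - \<rho>) \<le> 1 * 1 * 1" using x r
        by (intro mult_mono) (auto intro: power_le_one)
      then show ?thesis by simp
    qed
    moreover have "card ({..<p} - S) \<le> p" by (metis card_Diff_subset card_lessThan diff_le_self S(1) finS)
    ultimately show ?thesis by (simp add: mult_right_mono)
  qed
  finally show ?thesis using M by (simp add: divide_right_mono)
qed

lemma union_prob_bound:
  fixes w :: "nat set" and M :: "'a pmf"
  assumes "finite w"
  shows "measure_pmf.prob M {h. \<exists>j'\<in>w. P j' h} \<le> (\<Sum>j'\<in>w. measure_pmf.prob M {h. P j' h})"
proof -
  have "{h. \<exists>j'\<in>w. P j' h} = (\<Union>j'\<in>w. {h. P j' h})" by auto
  then show ?thesis using assms
    by (simp add: measure_pmf.finite_measure_subadditive_finite)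
qed

lemma inner_interf:
  assumes R1: "R1 = Rin \<times> ({..<p} - S)" and T: "T \<subseteq> Rin" "finite Rin"
    and w: "w \<subseteq> {..<p} - S" "real (card w) \<le> M"
    and x: "0 \<le> x" "x \<le> 1" and s: "1 \<le> s" and Sp: "S \<subseteq> {..<p}"
  shows "measure_pmf.expectation (Pi_pmf R1 False (QQ p x \<rho>))
     (\<lambda>h. s ^ card {i \<in> T. \<exists>j'\<in>w. h (i, j')}) \<le> (1 + (s - 1) * M * x) ^ card T"
proof -
  let ?N = "Pi_pmf R1 False (QQ p x \<rho>)"
  let ?E = "measure_pmf.expectation ?N"
  have finR1: "finite R1" using R1 T(2) by simp
  have finT: "finite T" using T finite_subset by blast
  have finw: "finite w" using w(1) finite_subset by blast
  have "?E (\<lambda>h. s ^ card {i \<in> T. \<exists>j'\<in>w. h (i, j')}) = ?E (\<lambda>h. \<Prod>i\<in>T. if \<exists>j'\<in>w. h (i, j') then s else 1)"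
    using finT by (simp add: prod_if_pow)
  also have "\<dots> = (\<Prod>i\<in>T. ?E (\<lambda>h. if \<exists>j'\<in>w. h (i, j') then s else 1))"
  proof (rule exp_block[where Bl = "\<lambda>i. {i} \<times> ({..<p} - S)"])
    show "finite T" by fact
    show "finite R1" by fact
    show "\<And>b. b \<in> T \<Longrightarrow> {b} \<times> ({..<p} - S) \<subseteq> R1" using R1 T by auto
    show "disjoint_family_on (\<lambda>i. {i} \<times> ({..<p} - S)) T" by (auto simp: disjoint_family_on_def)
    fix b :: nat and f f' :: "nat \<times> nat \<Rightarrow> bool"
    assume "b \<in> T" and h: "\<And>c. c \<in> {b} \<times> ({..<p} - S) \<Longrightarrow> f c = f' c"
    then have "\<forall>j'\<in>w. f (b, j') = f' (b, j')" using w(1) by auto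
    then show "(if \<exists>j'\<in>w. f (b, j') then s else 1) = (if \<exists>j'\<in>w. f' (b, j') then s else 1)" by auto
  qed
  also have "\<dots> \<le> (\<Prod>i\<in>T. 1 + (s - 1) * M * x)"
  proof (rule prod_mono, rule conjI)
    fix i assume i: "i \<in> T"
    have eq: "?E (\<lambda>h. if \<exists>j'\<in>w. h (i, j') then s else 1) = 1 + (s - 1) * measure_pmf.prob ?N {h. \<exists>j'\<in>w. h (i, j')}"
    proof -
      have "?E (\<lambda>h. if \<exists>j'\<in>w. h (i, j') then s else 1) = ?E (\<lambda>h. 1 + (s - 1) * (if \<exists>j'\<in>w. h (i, j') then 1 else 0))"
        by (intro Bochner_Integration.integral_cong) auto
      also have "\<dots> = 1 + (s - 1) * measure_pmf.prob ?N {h. \<exists>j'\<in>w. h (i, j')}"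
        by (rule exp_ind_fin[OF fin_set_Pi_bool[OF finR1]])
      finally show ?thesis .
    qed
    have "measure_pmf.prob ?N {h. \<exists>j'\<in>w. h (i, j')} \<le> (\<Sum>j'\<in>w. measure_pmf.prob ?N {h. h (i, j')})"
      by (rule union_prob_bound[OF finw])
    also have "\<dots> = (\<Sum>j'\<in>w. x)"
    proof (rule sum.cong[OF refl])
      fix j' assume j': "j' \<in> w"
      have "measure_pmf.prob ?N {h. h (i, j')} = measure_pmf.prob ?N {h. (\<forall>c\<in>{(i,j')}. h c) \<and> (\<forall>c\<in>{}. \<not> h c)}"
        by simp
      also have "\<dots> = (\<Prod>c\<in>{(i,j')}. pmf (QQ p x \<rho> c) True) * (\<Prod>c\<in>{}. pmf (QQ p x \<rho> c) False)"
        using i j' R1 T w(1) by (intro rect_prob finR1) auto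
      also have "\<dots> = x" using j' w(1) x by (auto simp: pmfQ_T)
      finally show "measure_pmf.prob ?N {h. h (i, j')} = x" .
    qed
    also have "\<dots> = real (card w) * x" by simp
    also have "\<dots> \<le> M * x" using w(2) x by (intro mult_right_mono) auto
    finally have "measure_pmf.prob ?N {h. \<exists>j'\<in>w. h (i, j')} \<le> M * x" .
    then have "(s - 1) * measure_pmf.prob ?N {h. \<exists>j'\<in>w. h (i, j')} \<le> (s - 1) * (M * x)"
      using s by (intro mult_left_mono) auto
    then show "?E (\<lambda>h. if \<exists>j'\<in>w. h (i, j') then s else 1) \<le> 1 + (s - 1) * M * x"
      unfolding eq by (simp add: mult.assoc)
    show "0 \<le> ?E (\<lambda>h. if \<exists>j'\<in>w. h (i, j') then s else 1)"
      using s by (intro Bochner_Integration.integral_nonneg) auto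
  qed
  also have "\<dots> = (1 + (s - 1) * M * x) ^ card T" by simp
  finally show ?thesis .
qed

lemma boundI:
  assumes S: "S \<subseteq> {..<p}" "card S = k" and j: "j \<in> S"
    and x: "0 \<le> x" "x \<le> 1" and s: "1 \<le> s" and M: "0 \<le> M"
  shows "measure_pmf.prob (Pi_pmf (UU n p) False (QQ p x \<rho>))
     {W. real (card (Iset n p S W j)) > b \<and> real (card (Wt n p S W)) \<le> M}
     \<le> (1 - x + x * (1 + (s - 1) * M * x)) ^ n / s powr b"
proof -
  let ?Q = "QQ p x \<rho>"
  let ?M = "Pi_pmf (UU n p) False ?Q"
  let ?E = "measure_pmf.expectation"
  define c0 where "c0 = 1 + (s - 1) * M * x"
  have c0: "1 \<le> c0" using s M x by (simp add: c0_def)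
  have finS: "finite S" using S(1) finite_subset by blast
  have jp: "j < p" using j S by auto
  define F where "F W = (if real (card (Wt n p S W)) \<le> M then s ^ card (Iset n p S W j) else 0)" for W
  have Fnn: "F W \<ge> 0" for W using s by (simp add: F_def)
  have "measure_pmf.prob ?M {W. real (card (Iset n p S W j)) > b \<and> real (card (Wt n p S W)) \<le> M}
     \<le> ?E ?M (\<lambda>W. F W / s powr b)"
  proof (rule prob_le_exp[OF finM])
    fix W show "0 \<le> F W / s powr b" using Fnn by simp
  next
    fix W assume "W \<in> {W. real (card (Iset n p S W j)) > b \<and> real (card (Wt n p S W)) \<le> M}"
    then have h: "real (card (Iset n p S W j)) > b" "real (card (Wt n p S W)) \<le> M" by auto
    have "F W = s powr real (card (Iset n p S W j))" using h(2) s by (simp add: F_def powr_realpow)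
    then have "F W \<ge> s powr b" using h(1) s by (simp add: powr_mono)
    then show "1 \<le> F W / s powr b" using s by simp
  qed
  also have "\<dots> = ?E ?M F / s powr b" by simp
  also have "?E ?M F \<le> (1 - x + x * c0) ^ n"
  proof -
    define D where "D = {..<n} \<times> S"
    define R where "R = UU n p - D"
    have finD: "finite D" using finS by (simp add: D_def)
    have finR: "finite R" by (simp add: R_def UU_def)
    have DR: "D \<inter> R = {}" by (auto simp: R_def)
    have UDR: "UU n p = D \<union> R" using S(1) by (auto simp: R_def D_def UU_def)
    define mD where "mD d h = (\<lambda>c. if c \<in> D then d c else h c)" for d h :: "nat \<times> nat \<Rightarrow> bool"
    define Tj where "Tj d = {i. i < n \<and> d (i, j)}" for d :: "nat \<times> nat \<Rightarrow> bool"
    have step1: "?E ?M F = ?E (Pi_pmf D False ?Q) (\<lambda>d. ?E (Pi_pmf R False ?Q) (\<lambda>h. F (mD d h)))"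
      unfolding UDR mD_def by (rule exp_split[OF finD finR DR])
    have step2: "?E (Pi_pmf R False ?Q) (\<lambda>h. F (mD d h)) \<le> c0 ^ card (Tj d)" for d
    proof -
      define Rin where "Rin = {i. i < n \<and> (\<exists>j''\<in>S. d (i, j''))}"
      define R1 where "R1 = Rin \<times> ({..<p} - S)"
      define R2 where "R2 = R - R1"
      have finRin: "finite Rin" by (simp add: Rin_def)
      have finR1: "finite R1" using finRin by (simp add: R1_def)
      have finR2: "finite R2" using finR by (simp add: R2_def)
      have R12: "R2 \<inter> R1 = {}" by (auto simp: R2_def)
      have RR: "R = R2 \<union> R1" using S(1) by (auto simp: R2_def R1_def R_def Rin_def UU_def D_def)
      define m2 where "m2 g h = (\<lambda>c. if c \<in> R2 then g c else h c)" for g h :: "nat \<times> nat \<Rightarrow> bool"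
      have split2: "?E (Pi_pmf R False ?Q) (\<lambda>h. F (mD d h)) =
          ?E (Pi_pmf R2 False ?Q) (\<lambda>g. ?E (Pi_pmf R1 False ?Q) (\<lambda>h. F (mD d (m2 g h))))"
        unfolding RR m2_def by (rule exp_split[OF finR2 finR1 R12])
      have outside: "mD d (m2 g h) (i, j') = g (i, j')"
        if "i < n" "j' \<le> p" "j' \<notin> S" "i \<notin> Rin" for g h i j'
        using that by (auto simp: mD_def m2_def R2_def R1_def R_def D_def UU_def)
      have noS_eq: "noS S (mD d h) i = (\<forall>j''\<in>S. \<not> d (i, j''))" if "i < n" for h i
        using that by (auto simp: noS_def mD_def D_def)
      have Wt_eq: "Wt n p S (mD d (m2 g h)) = Wt n p S (mD d (m2 g (\<lambda>_. False)))" for g h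
      proof -
        have "(\<forall>i<n. mD d (m2 g h) (i, j') \<and> noS S (mD d (m2 g h)) i \<longrightarrow> mD d (m2 g h) (i, p)) =
              (\<forall>i<n. mD d (m2 g (\<lambda>_. False)) (i, j') \<and> noS S (mD d (m2 g (\<lambda>_. False))) i \<longrightarrow> mD d (m2 g (\<lambda>_. False)) (i, p))"
          if "j' < p" "j' \<notin> S" for j'
        proof -
          have "(mD d (m2 g h) (i, j') \<and> noS S (mD d (m2 g h)) i \<longrightarrow> mD d (m2 g h) (i, p)) =
                (mD d (m2 g (\<lambda>_. False)) (i, j') \<and> noS S (mD d (m2 g (\<lambda>_. False))) i \<longrightarrow> mD d (m2 g (\<lambda>_. False)) (i, p))"
            if i: "i < n" for i
          proof (cases "\<forall>j''\<in>S. \<not> d (i, j'')")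
            case True
            then have "i \<notin> Rin" by (auto simp: Rin_def)
            moreover have "p \<notin> S" using S(1) by auto
            ultimately show ?thesis using i True \<open>j' < p\<close> \<open>j' \<notin> S\<close>
              by (simp add: noS_eq outside less_imp_le)
          next
            case False
            then show ?thesis using i by (simp add: noS_eq del: bex_simps) blast
          qed
          then show ?thesis by blast
        qed
        then show ?thesis unfolding Wt_def by blast
      qed
      have Iset_eq: "Iset n p S (mD d (m2 g h)) j = {i \<in> Tj d. \<exists>j'\<in>Wt n p S (mD d (m2 g (\<lambda>_. False))). h (i, j')}" for g h
      proof -
        have dj: "mD d (m2 g h) (i, j) = d (i, j)" if "i < n" for i
          using that j by (simp add: mD_def D_def)
        have hj: "mD d (m2 g h) (i, j') = h (i, j')" if "i < n" "d (i, j)" "j' < p" "j' \<notin> S" for i j'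
        proof -
          have "i \<in> Rin" using that j by (auto simp: Rin_def)
          then have "(i, j') \<in> R1" using that by (simp add: R1_def)
          then show ?thesis using that by (simp add: mD_def m2_def R2_def D_def)
        qed
        show ?thesis unfolding Iset_def Wt_eq[of g h, symmetric]
          using dj hj by (auto simp: Tj_def Wt_def)
      qed
      have inner: "?E (Pi_pmf R1 False ?Q) (\<lambda>h. F (mD d (m2 g h))) \<le> c0 ^ card (Tj d)" for g
      proof (cases "real (card (Wt n p S (mD d (m2 g (\<lambda>_. False))))) \<le> M")
        case True
        let ?w = "Wt n p S (mD d (m2 g (\<lambda>_. False)))"
        have "?E (Pi_pmf R1 False ?Q) (\<lambda>h. F (mD d (m2 g h))) =
              ?E (Pi_pmf R1 False ?Q) (\<lambda>h. s ^ card {i \<in> Tj d. \<exists>j'\<in>?w. h (i, j')})"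
        proof (intro Bochner_Integration.integral_cong refl)
          fix h
          show "F (mD d (m2 g h)) = s ^ card {i \<in> Tj d. \<exists>j'\<in>?w. h (i, j')}"
            unfolding F_def Wt_eq[of g h] Iset_eq[of g h] using True by simp
        qed
        also have "\<dots> \<le> c0 ^ card (Tj d)" unfolding c0_def
        proof (rule inner_interf[OF R1_def _ finRin _ True x s S(1)])
          show "Tj d \<subseteq> Rin" using j by (auto simp: Tj_def Rin_def)
          show "?w \<subseteq> {..<p} - S" by (auto simp: Wt_def)
        qed
        finally show ?thesis .
      next
        case False
        then have "?E (Pi_pmf R1 False ?Q) (\<lambda>h. F (mD d (m2 g h))) = ?E (Pi_pmf R1 False ?Q) (\<lambda>h. 0)"
        proof (intro Bochner_Integration.integral_cong refl)
          fix h
          show "F (mD d (m2 g h)) = 0"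
            unfolding F_def Wt_eq[of g h] using False by simp
        qed
        also have "\<dots> \<le> c0 ^ card (Tj d)" using c0 by simp
        finally show ?thesis .
      qed
      have "?E (Pi_pmf R2 False ?Q) (\<lambda>g. ?E (Pi_pmf R1 False ?Q) (\<lambda>h. F (mD d (m2 g h))))
          \<le> ?E (Pi_pmf R2 False ?Q) (\<lambda>g. c0 ^ card (Tj d))"
        by (rule exp_mono_fin[OF fin_set_Pi_bool[OF finR2]]) (rule inner)
      also have "\<dots> = c0 ^ card (Tj d)" by simp
      finally show ?thesis unfolding split2 .
    qed
    have "?E ?M F \<le> ?E (Pi_pmf D False ?Q) (\<lambda>d. c0 ^ card (Tj d))"
      unfolding step1 by (rule exp_mono_fin[OF fin_set_Pi_bool[OF finD]]) (rule step2)
    also have "\<dots> = ?E (Pi_pmf D False ?Q) (\<lambda>d. \<Prod>i<n. if d (i, j) then c0 else 1)"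
      unfolding Tj_def by (subst prod_if_pow) simp_all
    also have "\<dots> = (\<Prod>i<n. ?E (Pi_pmf D False ?Q) (\<lambda>d. if d (i, j) then c0 else 1))"
    proof (rule exp_block[where Bl = "\<lambda>i. {(i, j)}"])
      show "finite {..<n}" by simp
      show "finite D" by fact
      show "\<And>b. b \<in> {..<n} \<Longrightarrow> {(b, j)} \<subseteq> D" using j by (auto simp: D_def)
      show "disjoint_family_on (\<lambda>i. {(i, j)}) {..<n}" by (auto simp: disjoint_family_on_def)
      fix b :: nat and f f' :: "nat \<times> nat \<Rightarrow> bool" assume "b \<in> {..<n}" "\<And>c. c \<in> {(b, j)} \<Longrightarrow> f c = f' c"
      then show "(if f (b, j) then c0 else 1) = (if f' (b, j) then c0 else 1)" by auto
    qed
    also have "\<dots> = (\<Prod>i<n. 1 - x + x * c0)"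
    proof (rule prod.cong[OF refl])
      fix i assume i: "i \<in> {..<n}"
      have "?E (Pi_pmf D False ?Q) (\<lambda>d. if d (i, j) then c0 else 1) =
            ?E (Pi_pmf D False ?Q) (\<lambda>d. 1 + (c0 - 1) * (if d (i, j) then 1 else 0))"
        by (intro Bochner_Integration.integral_cong) auto
      also have "\<dots> = 1 + (c0 - 1) * measure_pmf.prob (Pi_pmf D False ?Q) {d. d (i, j)}"
        by (rule exp_ind_fin[OF fin_set_Pi_bool[OF finD]])
      also have "measure_pmf.prob (Pi_pmf D False ?Q) {d. d (i, j)} = x"
      proof -
        have "measure_pmf.prob (Pi_pmf D False ?Q) {d. d (i, j)} =
              measure_pmf.prob (Pi_pmf D False ?Q) {d. (\<forall>c\<in>{(i,j)}. d c) \<and> (\<forall>c\<in>{}. \<not> d c)}" by simp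
        also have "\<dots> = (\<Prod>c\<in>{(i,j)}. pmf (?Q c) True) * (\<Prod>c\<in>{}. pmf (?Q c) False)"
          using i j by (intro rect_prob finD) (auto simp: D_def)
        also have "\<dots> = x" using jp x by (simp add: pmfQ_T)
        finally show ?thesis .
      qed
      finally show "?E (Pi_pmf D False ?Q) (\<lambda>d. if d (i, j) then c0 else 1) = 1 - x + x * c0"
        by (simp add: algebra_simps)
    qed
    also have "\<dots> = (1 - x + x * c0) ^ n" by simp
    finally show ?thesis .
  qed
  then have "?E ?M F / s powr b \<le> (1 - x + x * c0) ^ n / s powr b"
    using s by (intro divide_right_mono) auto
  finally show ?thesis by (simp add: c0_def)
qed

lemma prob_mono_pmf: "A \<subseteq> B \<Longrightarrow> measure_pmf.prob M A \<le> measure_pmf.prob M B"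
  by (rule measure_pmf.finite_measure_mono) simp_all

lemma prob_or4:
  "measure_pmf.prob M {x. P1 x \<or> P2 x \<or> P3 x \<or> P4 x} \<le>
   measure_pmf.prob M {x. P1 x} + measure_pmf.prob M {x. P2 x} + measure_pmf.prob M {x. P3 x} + measure_pmf.prob M {x. P4 x}"
proof -
  have e: "{x. P1 x \<or> P2 x \<or> P3 x \<or> P4 x} = {x. P1 x} \<union> ({x. P2 x} \<union> ({x. P3 x} \<union> {x. P4 x}))" by auto
  have u: "measure_pmf.prob M (A \<union> B) \<le> measure_pmf.prob M A + measure_pmf.prob M B" for A B
    by (rule measure_Un_le) simp_all
  have "measure_pmf.prob M ({x. P1 x} \<union> ({x. P2 x} \<union> ({x. P3 x} \<union> {x. P4 x})))
     \<le> measure_pmf.prob M {x. P1 x} + measure_pmf.prob M ({x. P2 x} \<union> ({x. P3 x} \<union> {x. P4 x}))" by (rule u)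
  also have "\<dots> \<le> measure_pmf.prob M {x. P1 x} + (measure_pmf.prob M {x. P2 x} + measure_pmf.prob M ({x. P3 x} \<union> {x. P4 x}))"
    using u by (rule add_left_mono)
  also have "\<dots> \<le> measure_pmf.prob M {x. P1 x} + (measure_pmf.prob M {x. P2 x} + (measure_pmf.prob M {x. P3 x} + measure_pmf.prob M {x. P4 x}))"
    using u by (intro add_left_mono)
  finally show ?thesis unfolding e by (simp add: add.assoc)
qed

lemma err_le_sum:
  fixes \<nu> \<rho> \<beta> sA sC sI a b M :: real
  assumes k: "1 \<le> k" "k \<le> p" and x: "0 \<le> \<nu> / real k" "\<nu> / real k \<le> 1" and r: "0 \<le> \<rho>" "\<rho> \<le> 1"
    and sA: "1 \<le> sA" and sC: "0 < sC" "sC \<le> 1" and sI: "1 \<le> sI" and M: "0 < M"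
    and Tab: "\<beta> * real n * \<nu> * exp (- \<nu>) / real k \<le> a - b"
  shows "dd_error_prob p k n \<nu> \<rho> \<beta> \<le>
     real p * ((1 - (\<nu> / real k) * (1 - \<nu> / real k) ^ k + (\<nu> / real k) * (1 - \<nu> / real k) ^ k * \<rho> * sA) ^ n
        / sA powr (\<beta> * real n * \<nu> * exp (- \<nu>) / real k))
   + real k * ((1 - (\<nu> / real k) * (1 - \<nu> / real k) ^ (k - 1) + (\<nu> / real k) * (1 - \<nu> / real k) ^ (k - 1) * sC) ^ n / sC powr a)
   + real p * (1 - (\<nu> / real k) * (1 - \<nu> / real k) ^ k * (1 - \<rho>)) ^ n / M
   + real k * ((1 - \<nu> / real k + (\<nu> / real k) * (1 + (sI - 1) * M * (\<nu> / real k))) ^ n / sI powr b)"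
  (is "_ \<le> real p * ?BA + real k * ?BC + ?BW + real k * ?BI")
proof (rule err_bound)
  show "ksubsets p k \<noteq> {}"
  proof -
    have "{..<k} \<in> ksubsets p k" using k by (auto simp: ksubsets_def)
    then show ?thesis by blast
  qed
next
  fix S assume S: "S \<in> ksubsets p k"
  then have Sp: "S \<subseteq> {..<p}" and cS: "card S = k" by (auto simp: ksubsets_def)
  have finS: "finite S" using Sp finite_subset by blast
  define x where "x = \<nu> / real k"
  let ?M = "Pi_pmf (UU n p) False (QQ p x \<rho>)"
  define T where "T = \<beta> * real n * \<nu> * exp (- \<nu>) / real k"
  have "measure_pmf.prob ?M {W. dd_decode p n k \<nu> \<beta> (fst (Psi p W)) (observed_outcome S (fst (Psi p W)) (snd (Psi p W))) \<noteq> S}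
    \<le> measure_pmf.prob ?M {W. (\<exists>j\<in>{..<p} - S. EA n p S T W j) \<or>
         (\<exists>j\<in>S. real (card (Cset n S W j)) < a) \<or>
         real (card (Wt n p S W)) > M \<or>
         (\<exists>j\<in>S. real (card (Iset n p S W j)) > b \<and> real (card (Wt n p S W)) \<le> M)}"
  proof (rule prob_mono_pmf, rule subsetI)
    fix W assume "W \<in> {W. dd_decode p n k \<nu> \<beta> (fst (Psi p W)) (observed_outcome S (fst (Psi p W)) (snd (Psi p W))) \<noteq> S}"
    then have "dd_decode p n k \<nu> \<beta> (fst (Psi p W)) (observed_outcome S (fst (Psi p W)) (snd (Psi p W))) \<noteq> S" by simp
    from det_incl[OF Sp Tab this, of M] show "W \<in> {W. (\<exists>j\<in>{..<p} - S. EA n p S T W j) \<or>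
         (\<exists>j\<in>S. real (card (Cset n S W j)) < a) \<or>
         real (card (Wt n p S W)) > M \<or>
         (\<exists>j\<in>S. real (card (Iset n p S W j)) > b \<and> real (card (Wt n p S W)) \<le> M)}"
      by (auto simp: T_def)
  qed
  also have "\<dots> \<le> measure_pmf.prob ?M {W. \<exists>j\<in>{..<p} - S. EA n p S T W j}
      + measure_pmf.prob ?M {W. \<exists>j\<in>S. real (card (Cset n S W j)) < a}
      + measure_pmf.prob ?M {W. real (card (Wt n p S W)) > M}
      + measure_pmf.prob ?M {W. \<exists>j\<in>S. real (card (Iset n p S W j)) > b \<and> real (card (Wt n p S W)) \<le> M}"
    by (rule prob_or4)
  also have "\<dots> \<le> real p * ?BA + real k * ?BC + ?BW + real k * ?BI"
  proof (intro add_mono)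
    have "measure_pmf.prob ?M {W. \<exists>j\<in>{..<p} - S. EA n p S T W j} \<le> (\<Sum>j\<in>{..<p} - S. measure_pmf.prob ?M {W. EA n p S T W j})"
      by (rule union_prob_bound) simp
    also have "\<dots> \<le> (\<Sum>j\<in>{..<p} - S. ?BA)"
      by (intro sum_mono) (unfold T_def x_def, rule boundA[OF Sp cS], use x r sA in auto)
    also have "\<dots> \<le> real p * ?BA"
    proof -
      have q1: "(\<nu> / real k) * (1 - \<nu> / real k) ^ k \<le> 1"
        using x by (intro mult_le_one power_le_one) auto
      have q0: "0 \<le> (\<nu> / real k) * (1 - \<nu> / real k) ^ k * \<rho> * sA"
        using x r sA by (intro mult_nonneg_nonneg) auto
      have "0 \<le> ?BA" using q1 q0 by (intro divide_nonneg_nonneg zero_le_power) auto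
      moreover have "card ({..<p} - S) \<le> p" by (metis card_Diff_subset card_lessThan diff_le_self Sp finS)
      ultimately have "real (card ({..<p} - S)) * ?BA \<le> real p * ?BA" by (intro mult_right_mono) auto
      then show ?thesis by simp
    qed
    finally show "measure_pmf.prob ?M {W. \<exists>j\<in>{..<p} - S. EA n p S T W j} \<le> real p * ?BA" .
  next
    have "measure_pmf.prob ?M {W. \<exists>j\<in>S. real (card (Cset n S W j)) < a} \<le> (\<Sum>j\<in>S. measure_pmf.prob ?M {W. real (card (Cset n S W j)) < a})"
      by (rule union_prob_bound[OF finS])
    also have "\<dots> \<le> (\<Sum>j\<in>S. ?BC)"
      by (intro sum_mono) (unfold x_def, rule boundC[OF Sp cS], use x r sC in auto)
    also have "\<dots> = real k * ?BC" using cS by simp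
    finally show "measure_pmf.prob ?M {W. \<exists>j\<in>S. real (card (Cset n S W j)) < a} \<le> real k * ?BC" .
  next
    show "measure_pmf.prob ?M {W. real (card (Wt n p S W)) > M} \<le> ?BW"
      unfolding x_def by (rule boundW[OF Sp cS]) (use x r M in auto)
  next
    have "measure_pmf.prob ?M {W. \<exists>j\<in>S. real (card (Iset n p S W j)) > b \<and> real (card (Wt n p S W)) \<le> M}
       \<le> (\<Sum>j\<in>S. measure_pmf.prob ?M {W. real (card (Iset n p S W j)) > b \<and> real (card (Wt n p S W)) \<le> M})"
      by (rule union_prob_bound[OF finS])
    also have "\<dots> \<le> (\<Sum>j\<in>S. ?BI)"
      by (intro sum_mono) (unfold x_def, rule boundI[OF Sp cS], use x sI M in auto)
    also have "\<dots> = real k * ?BI" using cS by simp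
    finally show "measure_pmf.prob ?M {W. \<exists>j\<in>S. real (card (Iset n p S W j)) > b \<and> real (card (Wt n p S W)) \<le> M} \<le> real k * ?BI" .
  qed
  finally show "measure_pmf.prob (Pi_pmf (UU n p) False (QQ p (\<nu> / real k) \<rho>))
      {W. dd_decode p n k \<nu> \<beta> (fst (Psi p W)) (observed_outcome S (fst (Psi p W)) (snd (Psi p W))) \<noteq> S}
      \<le> real p * ?BA + real k * ?BC + ?BW + real k * ?BI" unfolding x_def .
qed

lemma pow_exp_bound:
  fixes t :: real
  assumes "0 \<le> 1 + t"
  shows "(1 + t) ^ n \<le> exp (real n * t)"
proof -
  have "(1 + t) ^ n \<le> exp t ^ n"
    using assms exp_ge_add_one_self[of t] by (intro power_mono) (auto simp: add.commute)
  also have "\<dots> = exp (real n * t)" by (simp add: exp_of_nat_mult)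
  finally show ?thesis .
qed

lemma ek_lower:
  fixes \<nu> :: real and k :: nat
  assumes "0 \<le> \<nu>" "1 \<le> k" "\<nu> / real k \<le> 1/2"
  shows "(1 - \<nu> / real k) ^ k \<ge> exp (- \<nu>) * exp (- 2 * \<nu>\<^sup>2 / real k)"
proof -
  define x where "x = \<nu> / real k"
  have x: "0 \<le> x" "x \<le> 1/2" using assms by (auto simp: x_def)
  have "(1 - x) ^ k = exp (real k * ln (1 - x))"
    using x by (subst exp_of_nat_mult) simp
  also have "real k * ln (1 - x) \<ge> real k * (- x - 2 * x\<^sup>2)"
    using ln_one_minus_pos_lower_bound[OF x] by (intro mult_left_mono) auto
  then have "exp (real k * ln (1 - x)) \<ge> exp (real k * (- x - 2 * x\<^sup>2))" by simp
  also have "real k * (- x - 2 * x\<^sup>2) = - \<nu> + (- 2 * \<nu>\<^sup>2 / real k)"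
    using assms(2) by (simp add: x_def power2_eq_square field_simps)
  also have "exp (- \<nu> + (- 2 * \<nu>\<^sup>2 / real k)) = exp (- \<nu>) * exp (- 2 * \<nu>\<^sup>2 / real k)"
    by (rule exp_add)
  finally show ?thesis by (simp add: x_def)
qed

lemma nq_lower:
  fixes \<nu> :: real and k n :: nat
  assumes "0 \<le> \<nu>" "1 \<le> k" "\<nu> / real k \<le> 1/2"
  shows "real n * ((\<nu> / real k) * (1 - \<nu> / real k) ^ k) \<ge>
         (real n * \<nu> * exp (- \<nu>) / real k) * exp (- 2 * \<nu>\<^sup>2 / real k)"
proof -
  have "real n * (\<nu> / real k) * (exp (- \<nu>) * exp (- 2 * \<nu>\<^sup>2 / real k)) \<le> real n * (\<nu> / real k) * (1 - \<nu> / real k) ^ k"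
    using ek_lower[OF assms] assms by (intro mult_left_mono) auto
  then show ?thesis by (simp add: field_simps)
qed

lemma D1_rho_identity:
  fixes \<rho> \<beta> :: real
  assumes "0 < \<rho>"
  shows "(1 - \<beta>) + \<beta> * ln (\<beta> / \<rho>) = (1 - \<rho>) + \<rho> * D_gamma 1 (\<beta> / \<rho>)"
  using assms by (simp add: D_gamma_def field_simps)

lemma partA:
  fixes \<nu> \<rho> \<beta> \<eta> \<xi> :: real and k n p :: nat
  assumes nu: "0 < \<nu>" and r: "0 < \<rho>" "\<rho> < \<beta>" "\<beta> < 1" and k: "1 \<le> k" "\<nu> / real k \<le> 1/2" and p: "1 \<le> p"
    and H1: "(real n * \<nu> * exp (- \<nu>) / real k) * (1 - \<rho>) \<ge> (1 + \<eta>) * (1 - \<xi>) * ln (real p)"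
    and H3: "(real n * \<nu> * exp (- \<nu>) / real k) * \<rho> * D_gamma 1 (\<beta> / \<rho>) \<ge> (1 + \<eta>) * \<xi> * ln (real p)"
    and H4: "exp (- 2 * \<nu>\<^sup>2 / real k) * (1 + \<eta>) \<ge> 1 + \<eta> / 2"
  shows "real p * ((1 - (\<nu> / real k) * (1 - \<nu> / real k) ^ k + (\<nu> / real k) * (1 - \<nu> / real k) ^ k * \<rho> * (\<beta> / \<rho>)) ^ n
        / (\<beta> / \<rho>) powr (\<beta> * real n * \<nu> * exp (- \<nu>) / real k)) \<le> exp (- (\<eta> / 2) * ln (real p))"
proof -
  define x where "x = \<nu> / real k"
  define q where "q = x * (1 - x) ^ k"
  define \<mu> where "\<mu> = real n * \<nu> * exp (- \<nu>) / real k"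
  define \<gamma> where "\<gamma> = exp (- 2 * \<nu>\<^sup>2 / real k)"
  define L where "L = ln (real p)"
  have x: "0 \<le> x" "x \<le> 1" using nu k by (auto simp: x_def)
  have mu0: "0 \<le> \<mu>" using nu by (simp add: \<mu>_def)
  have g1: "\<gamma> \<le> 1" "0 \<le> \<gamma>" by (auto simp: \<gamma>_def)
  have L0: "0 \<le> L" using p by (simp add: L_def)
  have q1: "q \<le> 1" using x by (simp add: q_def mult_le_one power_le_one)
  have nq: "real n * q \<ge> \<mu> * \<gamma>" using nq_lower[of \<nu> k n] nu k by (simp add: q_def x_def \<mu>_def \<gamma>_def)
  have base: "1 - x * (1 - x) ^ k + x * (1 - x) ^ k * \<rho> * (\<beta> / \<rho>) = 1 + (- q * (1 - \<beta>))"
    using r by (simp add: q_def field_simps)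
  have bnn: "0 \<le> 1 + - q * (1 - \<beta>)"
  proof -
    have "0 \<le> q" using x by (simp add: q_def)
    then have "0 \<le> \<beta> * q" using r by simp
    then show "0 \<le> 1 + - q * (1 - \<beta>)" using q1 by (simp add: algebra_simps)
  qed
  have "(1 + (- q * (1 - \<beta>))) ^ n \<le> exp (real n * (- q * (1 - \<beta>)))"
    by (rule pow_exp_bound[OF bnn])
  also have "\<dots> \<le> exp (- (\<mu> * \<gamma>) * (1 - \<beta>))"
    using nq r by (simp add: mult_right_mono)
  finally have b1: "(1 + (- q * (1 - \<beta>))) ^ n \<le> exp (- (\<mu> * \<gamma>) * (1 - \<beta>))" .
  have pw: "(\<beta> / \<rho>) powr (\<beta> * \<mu>) = exp (\<beta> * \<mu> * ln (\<beta> / \<rho>))"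
    using r by (simp add: powr_def)
  have B0: "0 \<le> \<beta> * ln (\<beta> / \<rho>)" using r by (intro mult_nonneg_nonneg) auto
  have key: "\<mu> * \<gamma> * (1 - \<beta>) + \<beta> * \<mu> * ln (\<beta> / \<rho>) \<ge> (1 + \<eta> / 2) * L"
  proof -
    have "\<beta> * \<mu> * ln (\<beta> / \<rho>) \<ge> \<gamma> * (\<mu> * (\<beta> * ln (\<beta> / \<rho>)))"
      using g1 mu0 B0 by (metis mult.assoc mult.commute mult_left_le_one_le mult_nonneg_nonneg)
    then have "\<mu> * \<gamma> * (1 - \<beta>) + \<beta> * \<mu> * ln (\<beta> / \<rho>) \<ge> \<gamma> * (\<mu> * ((1 - \<beta>) + \<beta> * ln (\<beta> / \<rho>)))"
      by (simp add: algebra_simps)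
    also have "\<mu> * ((1 - \<beta>) + \<beta> * ln (\<beta> / \<rho>)) = \<mu> * (1 - \<rho>) + \<mu> * \<rho> * D_gamma 1 (\<beta> / \<rho>)"
    proof -
      have "\<mu> * ((1 - \<beta>) + \<beta> * ln (\<beta> / \<rho>)) = \<mu> * ((1 - \<rho>) + \<rho> * D_gamma 1 (\<beta> / \<rho>))"
        using D1_rho_identity[OF r(1), of \<beta>] by simp
      then show ?thesis by (simp only: distrib_left mult.assoc)
    qed
    also have "\<dots> \<ge> (1 + \<eta>) * L"
      using H1 H3 by (simp add: \<mu>_def L_def algebra_simps)
    then have "\<gamma> * (\<mu> * (1 - \<rho>) + \<mu> * \<rho> * D_gamma 1 (\<beta> / \<rho>)) \<ge> \<gamma> * ((1 + \<eta>) * L)"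
      using g1 by (intro mult_left_mono) auto
    also have "\<gamma> * ((1 + \<eta>) * L) \<ge> (1 + \<eta> / 2) * L"
      using H4 L0 by (simp add: \<gamma>_def mult.assoc[symmetric] mult_right_mono)
    finally show ?thesis by linarith
  qed
  have "real p * ((1 + (- q * (1 - \<beta>))) ^ n / (\<beta> / \<rho>) powr (\<beta> * \<mu>))
        \<le> exp L * (exp (- (\<mu> * \<gamma>) * (1 - \<beta>)) / exp (\<beta> * \<mu> * ln (\<beta> / \<rho>)))"
    unfolding pw
  proof (intro mult_mono divide_right_mono)
    show "real p \<le> exp L" using p by (simp add: L_def)
    show "0 \<le> (1 + - q * (1 - \<beta>)) ^ n / exp (\<beta> * \<mu> * ln (\<beta> / \<rho>))"
      using bnn by simp
  qed (use b1 in auto)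
  also have "\<dots> = exp (L - (\<mu> * \<gamma> * (1 - \<beta>) + \<beta> * \<mu> * ln (\<beta> / \<rho>)))"
    by (simp add: exp_diff exp_add[symmetric] algebra_simps)
  also have "\<dots> \<le> exp (- (\<eta> / 2) * L)"
    using key by (simp add: algebra_simps)
  finally have fin: "real p * ((1 + (- q * (1 - \<beta>))) ^ n / (\<beta> / \<rho>) powr (\<beta> * \<mu>)) \<le> exp (- (\<eta> / 2) * L)" .
  have e1: "\<beta> * real n * \<nu> * exp (- \<nu>) / real k = \<beta> * \<mu>" by (simp add: \<mu>_def)
  show ?thesis unfolding x_def[symmetric] e1 base using fin by (simp add: L_def)
qed

lemma partC:
  fixes \<nu> \<beta>' \<eta> :: real and k n :: nat
  assumes nu: "0 < \<nu>" and b: "0 < \<beta>'" "\<beta>' < 1" and k: "1 \<le> k" "\<nu> / real k \<le> 1/2" and eta: "0 < \<eta>"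
    and H2: "(real n * \<nu> * exp (- \<nu>) / real k) * D_gamma 1 \<beta>' \<ge> (1 + \<eta> / 2) * ln (real k)"
    and H5: "1 - exp (- 2 * \<nu>\<^sup>2 / real k) \<le> D_gamma 1 \<beta>' * ((\<eta> / 4) / (1 + \<eta> / 2))"
    and Dpos: "0 < D_gamma 1 \<beta>'"
  shows "real k * ((1 - (\<nu> / real k) * (1 - \<nu> / real k) ^ (k - 1) + (\<nu> / real k) * (1 - \<nu> / real k) ^ (k - 1) * \<beta>') ^ n
         / \<beta>' powr (\<beta>' * (real n * \<nu> * exp (- \<nu>) / real k))) \<le> exp (- (\<eta> / 4) * ln (real k))"
proof -
  define x where "x = \<nu> / real k"
  define q where "q = x * (1 - x) ^ k"
  define r where "r = x * (1 - x) ^ (k - 1)"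
  define \<mu> where "\<mu> = real n * \<nu> * exp (- \<nu>) / real k"
  define \<gamma> where "\<gamma> = exp (- 2 * \<nu>\<^sup>2 / real k)"
  define lk where "lk = ln (real k)"
  define D where "D = D_gamma 1 \<beta>'"
  have x: "0 \<le> x" "x \<le> 1" using nu k by (auto simp: x_def)
  have mu0: "0 \<le> \<mu>" using nu by (simp add: \<mu>_def)
  have g1: "\<gamma> \<le> 1" "0 \<le> \<gamma>" by (auto simp: \<gamma>_def)
  have lk0: "0 \<le> lk" using k by (simp add: lk_def)
  have r1: "r \<le> 1" using x by (simp add: r_def mult_le_one power_le_one)
  have qr: "q \<le> r" unfolding q_def r_def using x by (intro mult_left_mono power_decreasing) auto
  have nq: "real n * q \<ge> \<mu> * \<gamma>" using nq_lower[of \<nu> k n] nu k by (simp add: q_def x_def \<mu>_def \<gamma>_def)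
  have base: "1 - x * (1 - x) ^ (k - 1) + x * (1 - x) ^ (k - 1) * \<beta>' = 1 + (- r * (1 - \<beta>'))"
    by (simp add: r_def field_simps)
  have bnn: "0 \<le> 1 + - r * (1 - \<beta>')"
  proof -
    have "0 \<le> r" using x by (simp add: r_def)
    then have "0 \<le> \<beta>' * r" using b by simp
    then show ?thesis using r1 by (simp add: algebra_simps)
  qed
  have "(1 + (- r * (1 - \<beta>'))) ^ n \<le> exp (real n * (- r * (1 - \<beta>')))"
    by (rule pow_exp_bound[OF bnn])
  also have "\<dots> \<le> exp (- (\<mu> * \<gamma>) * (1 - \<beta>'))"
  proof -
    have "\<mu> * \<gamma> \<le> real n * r" using nq qr by (meson order_trans mult_left_mono of_nat_0_le_iff)
    then show ?thesis using b by (simp add: mult_right_mono)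
  qed
  finally have b1: "(1 + (- r * (1 - \<beta>'))) ^ n \<le> exp (- (\<mu> * \<gamma>) * (1 - \<beta>'))" .
  have pw: "\<beta>' powr (\<beta>' * \<mu>) = exp (\<beta>' * \<mu> * ln \<beta>')"
    using b by (simp add: powr_def)
  have key: "\<mu> * \<gamma> * (1 - \<beta>') + \<beta>' * \<mu> * ln \<beta>' \<ge> (1 + \<eta> / 4) * lk"
  proof -
    have Deq: "D = \<beta>' * ln \<beta>' - \<beta>' + 1" by (simp add: D_def D_gamma_def)
    have "\<mu> * \<gamma> * (1 - \<beta>') + \<beta>' * \<mu> * ln \<beta>' = \<mu> * (D - (1 - \<gamma>) * (1 - \<beta>'))"
      by (simp add: Deq algebra_simps)
    also have "\<dots> \<ge> \<mu> * (D - (1 - \<gamma>))"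
    proof -
      have "(1 - \<gamma>) * (1 - \<beta>') \<le> (1 - \<gamma>) * 1" using g1 b by (intro mult_left_mono) auto
      then show ?thesis using mu0 by (intro mult_left_mono) auto
    qed
    also have "D - (1 - \<gamma>) \<ge> D * ((1 + \<eta> / 4) / (1 + \<eta> / 2))"
    proof -
      have "D * ((1 + \<eta> / 4) / (1 + \<eta> / 2)) = D - D * ((\<eta> / 4) / (1 + \<eta> / 2))"
        using eta by (simp add: field_simps)
      then show ?thesis using H5 by (simp add: \<gamma>_def D_def)
    qed
    then have "\<mu> * (D - (1 - \<gamma>)) \<ge> \<mu> * (D * ((1 + \<eta> / 4) / (1 + \<eta> / 2)))"
      using mu0 by (intro mult_left_mono) auto
    also have "\<mu> * (D * ((1 + \<eta> / 4) / (1 + \<eta> / 2))) = (\<mu> * D) * ((1 + \<eta> / 4) / (1 + \<eta> / 2))" by simp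
    also have "\<dots> \<ge> ((1 + \<eta> / 2) * lk) * ((1 + \<eta> / 4) / (1 + \<eta> / 2))"
      using H2 eta by (intro mult_right_mono) (auto simp: \<mu>_def D_def lk_def)
    also have "((1 + \<eta> / 2) * lk) * ((1 + \<eta> / 4) / (1 + \<eta> / 2)) = (1 + \<eta> / 4) * lk"
      using eta by (simp add: field_simps)
    finally show ?thesis by linarith
  qed
  have "real k * ((1 + (- r * (1 - \<beta>'))) ^ n / \<beta>' powr (\<beta>' * \<mu>))
        \<le> exp lk * (exp (- (\<mu> * \<gamma>) * (1 - \<beta>')) / exp (\<beta>' * \<mu> * ln \<beta>'))"
    unfolding pw
  proof (intro mult_mono divide_right_mono)
    show "real k \<le> exp lk" using k by (simp add: lk_def)
    show "0 \<le> (1 + - r * (1 - \<beta>')) ^ n / exp (\<beta>' * \<mu> * ln \<beta>')"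
      using bnn by simp
  qed (use b1 in auto)
  also have "\<dots> = exp (lk - (\<mu> * \<gamma> * (1 - \<beta>') + \<beta>' * \<mu> * ln \<beta>'))"
    by (simp add: exp_diff exp_add[symmetric] algebra_simps)
  also have "\<dots> \<le> exp (- (\<eta> / 4) * lk)"
    using key by (simp add: algebra_simps)
  finally have fin: "real k * ((1 + (- r * (1 - \<beta>'))) ^ n / \<beta>' powr (\<beta>' * \<mu>)) \<le> exp (- (\<eta> / 4) * lk)" .
  show ?thesis unfolding x_def[symmetric] \<mu>_def[symmetric] base using fin by (simp add: lk_def)
qed

lemma partW:
  fixes \<nu> \<rho> \<eta> \<xi> \<xi>' :: real and k n p :: nat
  assumes nu: "0 < \<nu>" and r: "0 < \<rho>" "\<rho> < 1" and k: "1 \<le> k" "\<nu> / real k \<le> 1/2" and p: "1 \<le> p"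
    and xi: "\<xi> < 1"
    and H1: "(real n * \<nu> * exp (- \<nu>) / real k) * (1 - \<rho>) \<ge> (1 + \<eta>) * (1 - \<xi>) * ln (real p)"
    and H4: "exp (- 2 * \<nu>\<^sup>2 / real k) * (1 + \<eta>) \<ge> 1"
  shows "real p * (1 - (\<nu> / real k) * (1 - \<nu> / real k) ^ k * (1 - \<rho>)) ^ n / real p powr \<xi>'
     \<le> exp (- (\<xi>' - \<xi>) * ln (real p))"
proof -
  define x where "x = \<nu> / real k"
  define q where "q = x * (1 - x) ^ k"
  define \<mu> where "\<mu> = real n * \<nu> * exp (- \<nu>) / real k"
  define \<gamma> where "\<gamma> = exp (- 2 * \<nu>\<^sup>2 / real k)"
  define L where "L = ln (real p)"
  have x: "0 \<le> x" "x \<le> 1" using nu k by (auto simp: x_def)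
  have mu0: "0 \<le> \<mu>" using nu by (simp add: \<mu>_def)
  have L0: "0 \<le> L" using p by (simp add: L_def)
  have q1: "q \<le> 1" "0 \<le> q" using x by (auto simp: q_def mult_le_one power_le_one)
  have nq: "real n * q \<ge> \<mu> * \<gamma>" using nq_lower[of \<nu> k n] nu k by (simp add: q_def x_def \<mu>_def \<gamma>_def)
  have bnn: "0 \<le> 1 + - (q * (1 - \<rho>))"
  proof -
    have "0 \<le> \<rho> * q" using q1 r by simp
    then show ?thesis using q1 by (simp add: algebra_simps)
  qed
  have "(1 + - (q * (1 - \<rho>))) ^ n \<le> exp (real n * (- (q * (1 - \<rho>))))"
    by (rule pow_exp_bound[OF bnn])
  also have "\<dots> \<le> exp (- (\<mu> * \<gamma>) * (1 - \<rho>))"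
    using nq r by (simp add: mult_right_mono)
  finally have b1: "(1 + - (q * (1 - \<rho>))) ^ n \<le> exp (- (\<mu> * \<gamma>) * (1 - \<rho>))" .
  have key: "\<mu> * \<gamma> * (1 - \<rho>) \<ge> (1 - \<xi>) * L"
  proof -
    have "\<mu> * \<gamma> * (1 - \<rho>) = \<gamma> * (\<mu> * (1 - \<rho>))" by simp
    also have "\<dots> \<ge> \<gamma> * ((1 + \<eta>) * (1 - \<xi>) * L)"
      using H1 by (intro mult_left_mono) (auto simp: \<mu>_def L_def \<gamma>_def)
    also have "\<gamma> * ((1 + \<eta>) * (1 - \<xi>) * L) = (\<gamma> * (1 + \<eta>)) * ((1 - \<xi>) * L)" by simp
    also have "\<dots> \<ge> 1 * ((1 - \<xi>) * L)"
      using H4 xi L0 by (intro mult_right_mono) (auto simp: \<gamma>_def)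
    finally show ?thesis by simp
  qed
  have "real p * (1 + - (q * (1 - \<rho>))) ^ n / real p powr \<xi>' = exp L * (1 + - (q * (1 - \<rho>))) ^ n / exp (\<xi>' * L)"
    using p by (simp add: L_def powr_def)
  also have "\<dots> \<le> exp L * exp (- (\<mu> * \<gamma>) * (1 - \<rho>)) / exp (\<xi>' * L)"
    using b1 by (intro divide_right_mono mult_left_mono) auto
  also have "\<dots> = exp (L - \<mu> * \<gamma> * (1 - \<rho>) - \<xi>' * L)"
    by (simp add: exp_diff exp_add[symmetric] algebra_simps)
  also have "\<dots> \<le> exp (- (\<xi>' - \<xi>) * L)"
    using key by (simp add: algebra_simps)
  finally have fin: "real p * (1 + - (q * (1 - \<rho>))) ^ n / real p powr \<xi>' \<le> exp (- (\<xi>' - \<xi>) * L)" .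
  have e: "1 - x * (1 - x) ^ k * (1 - \<rho>) = 1 + - (q * (1 - \<rho>))" by (simp add: q_def)
  show ?thesis unfolding x_def[symmetric] e using fin by (simp add: L_def)
qed

lemma partI:
  fixes \<nu> \<delta> M :: real and k n :: nat
  assumes nu: "0 < \<nu>" and k: "1 \<le> k" and d: "0 < \<delta>" and M: "0 \<le> M"
    and H6: "(exp (4 / \<delta>) - 1) * \<nu> * exp \<nu> * M / real k \<le> 2"
    and Hmu: "real n * \<nu> * exp (- \<nu>) / real k \<ge> ln (real k)"
  shows "real k * ((1 - \<nu> / real k + (\<nu> / real k) * (1 + (exp (4 / \<delta>) - 1) * M * (\<nu> / real k))) ^ n
         / exp (4 / \<delta>) powr (\<delta> * (real n * \<nu> * exp (- \<nu>) / real k))) \<le> exp (- ln (real k))"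
proof -
  define x where "x = \<nu> / real k"
  define \<mu> where "\<mu> = real n * \<nu> * exp (- \<nu>) / real k"
  define sI where "sI = exp (4 / \<delta>)"
  define lk where "lk = ln (real k)"
  have sI: "1 \<le> sI" using d by (simp add: sI_def)
  have base: "1 - x + x * (1 + (sI - 1) * M * x) = 1 + (sI - 1) * M * x\<^sup>2"
    by (simp add: power2_eq_square algebra_simps)
  have bnn: "0 \<le> 1 + (sI - 1) * M * x\<^sup>2" using sI M by simp
  have "(1 + (sI - 1) * M * x\<^sup>2) ^ n \<le> exp (real n * ((sI - 1) * M * x\<^sup>2))"
    by (rule pow_exp_bound[OF bnn])
  also have "real n * ((sI - 1) * M * x\<^sup>2) = \<mu> * ((sI - 1) * \<nu> * exp \<nu> * M / real k)"
  proof -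
    have "exp (- \<nu>) * exp \<nu> = 1" by (simp add: exp_minus)
    then show ?thesis using k by (simp add: \<mu>_def x_def power2_eq_square field_simps)
  qed
  also have "\<dots> \<le> \<mu> * 2"
  proof -
    have "0 \<le> \<mu>" using nu by (simp add: \<mu>_def)
    then show ?thesis using H6 by (intro mult_left_mono) (auto simp: sI_def)
  qed
  finally have b1: "(1 + (sI - 1) * M * x\<^sup>2) ^ n \<le> exp (\<mu> * 2)" by simp
  have pw: "sI powr (\<delta> * \<mu>) = exp (4 * \<mu>)"
    using d by (simp add: powr_def sI_def)
  have "real k * ((1 + (sI - 1) * M * x\<^sup>2) ^ n / sI powr (\<delta> * \<mu>)) \<le> exp lk * (exp (\<mu> * 2) / exp (4 * \<mu>))"
    unfolding pw
  proof (intro mult_mono divide_right_mono)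
    show "real k \<le> exp lk" using k by (simp add: lk_def)
    show "0 \<le> (1 + (sI - 1) * M * x\<^sup>2) ^ n / exp (4 * \<mu>)" using bnn by simp
  qed (use b1 in auto)
  also have "\<dots> = exp (lk + \<mu> * 2 - 4 * \<mu>)" by (simp only: exp_add exp_diff times_divide_eq_right)
  also have "exp (lk + \<mu> * 2 - 4 * \<mu>) = exp (lk - 2 * \<mu>)" by simp
  also have "\<dots> \<le> exp (- lk)"
  proof -
    have "lk - 2 * \<mu> \<le> - lk" using Hmu by (simp add: \<mu>_def lk_def)
    then show ?thesis by (simp only: exp_le_cancel_iff)
  qed
  finally show ?thesis unfolding x_def[symmetric] \<mu>_def[symmetric] sI_def[symmetric] base by (simp add: lk_def)
qed

lemma ln_strict:
  fixes y :: real
  assumes "0 < y" "y \<noteq> 1"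
  shows "ln y < y - 1"
proof -
  have s: "0 < sqrt y" "sqrt y \<noteq> 1" using assms by auto
  have "ln y = 2 * ln (sqrt y)" using assms by (simp add: ln_sqrt)
  also have "\<dots> \<le> 2 * (sqrt y - 1)" using ln_le_minus_one[OF s(1)] by simp
  also have "\<dots> < y - 1"
  proof -
    have "0 < (sqrt y - 1)\<^sup>2" using s by simp
    also have "(sqrt y - 1)\<^sup>2 = y - 2 * sqrt y + 1" using assms by (simp add: power2_eq_square algebra_simps)
    finally show ?thesis by simp
  qed
  finally show ?thesis .
qed

lemma D1_pos:
  fixes t :: real
  assumes "0 < t" "t \<noteq> 1"
  shows "0 < D_gamma 1 t"
proof -
  have "ln (1 / t) < 1 / t - 1" using assms by (intro ln_strict) auto
  then have "- ln t < 1 / t - 1" using assms by (simp add: ln_div)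
  then have "t * (- ln t) < t * (1 / t - 1)" using assms by (intro mult_strict_left_mono) auto
  then show ?thesis using assms by (simp add: D_gamma_def algebra_simps)
qed

lemma D1_le1:
  fixes t :: real
  assumes "0 < t" "t < 1"
  shows "D_gamma 1 t \<le> 1"
proof -
  have "ln t < 0" using assms by simp
  then have "t * ln t \<le> 0" using assms by (simp add: mult_nonneg_nonpos)
  have "ln t \<le> 1" using \<open>ln t < 0\<close> by linarith
  then show ?thesis using assms by (simp add: D_gamma_def)
qed

lemma exists_beta':
  fixes \<beta> \<tau> :: real
  assumes "0 < \<beta>" "\<beta> < 1" "\<tau> < 1"
  shows "\<exists>\<beta>'. \<beta> < \<beta>' \<and> \<beta>' < 1 \<and> D_gamma 1 \<beta>' > \<tau> * D_gamma 1 \<beta>"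
proof -
  have Dpos: "0 < D_gamma 1 \<beta>" using assms by (intro D1_pos) auto
  have "((\<lambda>t. t * ln (t / 1) - t + 1) \<longlongrightarrow> \<beta> * ln (\<beta> / 1) - \<beta> + 1) (at_right \<beta>)"
    using assms by (intro tendsto_intros) auto
  then have lim: "((\<lambda>t. D_gamma 1 t) \<longlongrightarrow> D_gamma 1 \<beta>) (at_right \<beta>)"
    by (simp add: D_gamma_def)
  have "\<tau> * D_gamma 1 \<beta> < D_gamma 1 \<beta>" using Dpos assms by simp
  from order_tendstoD(1)[OF lim this]
  have ev1: "\<forall>\<^sub>F t in at_right \<beta>. \<tau> * D_gamma 1 \<beta> < D_gamma 1 t" .
  have ev2: "\<forall>\<^sub>F t in at_right \<beta>. t \<in> {\<beta><..<1}" using assms by (intro eventually_at_right_real)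
  have "\<forall>\<^sub>F t in at_right \<beta>. \<tau> * D_gamma 1 \<beta> < D_gamma 1 t \<and> t \<in> {\<beta><..<1}"
    using ev1 ev2 by eventually_elim auto
  then obtain t where "\<tau> * D_gamma 1 \<beta> < D_gamma 1 t \<and> t \<in> {\<beta><..<1}"
    using eventually_happens[of _ "at_right \<beta>"] trivial_limit_at_right_real[of \<beta>] by blast
  then show ?thesis by auto
qed

lemma hyps_from_nDD:
  fixes \<nu> \<rho> \<beta> \<xi> \<eta> :: real and k n p :: nat
  assumes nu: "0 < \<nu>" and r: "0 < \<rho>" "\<rho> < \<beta>" "\<beta> < 1" and k: "1 \<le> k" and xi: "0 < \<xi>" and eta: "0 < \<eta>"
    and n: "real n \<ge> (1 + \<eta>) * n_DD p k \<nu> \<rho> \<beta> \<xi>"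
  shows "(real n * \<nu> * exp (- \<nu>) / real k) * (1 - \<rho>) \<ge> (1 + \<eta>) * (1 - \<xi>) * ln (real p)"
    and "(real n * \<nu> * exp (- \<nu>) / real k) * D_gamma 1 \<beta> \<ge> (1 + \<eta>) * ln (real k)"
    and "(real n * \<nu> * exp (- \<nu>) / real k) * \<rho> * D_gamma 1 (\<beta> / \<rho>) \<ge> (1 + \<eta>) * \<xi> * ln (real p)"
proof -
  define c where "c = \<nu> * exp (- \<nu>)"
  have c: "0 < c" using nu by (simp add: c_def)
  have kp: "0 < real k" using k by simp
  have gen: "(real n * c / real k) * B \<ge> (1 + \<eta>) * A * Lg"
    if B: "0 < B" and nn: "real n \<ge> (1 + \<eta>) * (A / (c * B) * real k * Lg)" for A B Lg :: real
  proof -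
    have "real n * (c * B) \<ge> (1 + \<eta>) * (A / (c * B) * real k * Lg) * (c * B)"
      using nn c B by (intro mult_right_mono) auto
    also have "(1 + \<eta>) * (A / (c * B) * real k * Lg) * (c * B) = (1 + \<eta>) * A * Lg * real k"
      using c B by (simp add: field_simps)
    finally have "real n * (c * B) / real k \<ge> (1 + \<eta>) * A * Lg"
      using kp by (simp add: field_simps)
    then show ?thesis by (simp add: mult.assoc)
  qed
  have D1: "0 < D_gamma 1 \<beta>" using r by (intro D1_pos) auto
  have D2: "0 < D_gamma 1 (\<beta> / \<rho>)" using r by (intro D1_pos) auto
  have nd: "n_DD p k \<nu> \<rho> \<beta> \<xi> = max ((1 - \<xi>) / ((1 - \<rho>) * c) * real k * ln (real p))
     (max (1 / (c * D_gamma 1 \<beta>) * real k * ln (real k)) (\<xi> / (c * \<rho> * D_gamma 1 (\<beta> / \<rho>)) * real k * ln (real p)))"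
    by (simp add: n_DD_def Let_def c_def)
  have eta1: "0 \<le> 1 + \<eta>" using eta by simp
  have n1: "real n \<ge> (1 + \<eta>) * ((1 - \<xi>) / (c * (1 - \<rho>)) * real k * ln (real p))"
    using n unfolding nd by (smt (verit) eta1 mult_left_mono mult.commute)
  have n2: "real n \<ge> (1 + \<eta>) * (1 / (c * D_gamma 1 \<beta>) * real k * ln (real k))"
    using n unfolding nd by (smt (verit) eta1 mult_left_mono)
  have n3: "real n \<ge> (1 + \<eta>) * (\<xi> / (c * (\<rho> * D_gamma 1 (\<beta> / \<rho>))) * real k * ln (real p))"
    using n unfolding nd by (smt (verit) eta1 mult_left_mono mult.assoc)
  show "(real n * \<nu> * exp (- \<nu>) / real k) * (1 - \<rho>) \<ge> (1 + \<eta>) * (1 - \<xi>) * ln (real p)"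
    using gen[OF _ n1] r by (simp add: c_def mult.assoc)
  show "(real n * \<nu> * exp (- \<nu>) / real k) * D_gamma 1 \<beta> \<ge> (1 + \<eta>) * ln (real k)"
    using gen[OF D1 n2] by (simp add: c_def mult.assoc)
  show "(real n * \<nu> * exp (- \<nu>) / real k) * \<rho> * D_gamma 1 (\<beta> / \<rho>) \<ge> (1 + \<eta>) * \<xi> * ln (real p)"
    using gen[OF _ n3] r D2 by (simp add: c_def mult.assoc)
qed

lemma exp_neg_lim:
  fixes c :: real
  assumes "0 < c" "filterlim f at_top F"
  shows "((\<lambda>x. exp (- c * f x)) \<longlongrightarrow> 0) F"
proof -
  have "filterlim (\<lambda>x. c * f x) at_top F"
    using assms by (intro filterlim_tendsto_pos_mult_at_top[OF tendsto_const]) auto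
  then have "filterlim (\<lambda>x. - (c * f x)) at_bot F"
    by (simp add: filterlim_uminus_at_top)
  then show ?thesis using exp_at_bot by (auto intro: filterlim_compose)
qed

lemma powr_at_top_mine:
  assumes "(q::real) > 0"
  shows "filterlim (\<lambda>x. x powr q) at_top at_top"
proof (subst filterlim_cong[OF refl refl])
  show "LIM x at_top. exp (q * ln x) :> at_top"
    by (rule filterlim_compose[OF exp_at_top filterlim_tendsto_pos_mult_at_top[OF tendsto_const]])
       (simp_all add: ln_at_top assms)
  show "eventually (\<lambda>x. x powr q = exp (q * ln x)) at_top"
    using eventually_gt_at_top[of 0] by eventually_elim (simp add: powr_def)
qed

lemma per_p_bound:
  fixes \<rho> \<theta> \<nu> \<beta> \<xi> \<eta> \<beta>' \<xi>' :: real and k n p :: nat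
  assumes "0 < \<rho>" "\<rho> < 1" "0 < \<nu>"
    and "\<rho> < \<beta>" "\<beta> < 1" "0 < \<xi>" "\<xi> < 1" "0 < \<eta>"
    and b': "\<beta> < \<beta>'" "\<beta>' < 1" "D_gamma 1 \<beta>' > ((1 + \<eta> / 2) / (1 + \<eta>)) * D_gamma 1 \<beta>"
    and k: "1 \<le> k" "k \<le> p" "\<nu> / real k \<le> 1/2" and p: "1 \<le> p"
    and n: "real n \<ge> (1 + \<eta>) * n_DD p k \<nu> \<rho> \<beta> \<xi>"
    and H4: "exp (- 2 * \<nu>\<^sup>2 / real k) * (1 + \<eta>) \<ge> 1 + \<eta> / 2"
    and H5: "1 - exp (- 2 * \<nu>\<^sup>2 / real k) \<le> D_gamma 1 \<beta>' * ((\<eta> / 4) / (1 + \<eta> / 2))"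
    and H6: "(exp (4 / (\<beta>' - \<beta>)) - 1) * \<nu> * exp \<nu> * (real p powr \<xi>') / real k \<le> 2"
  shows "dd_error_prob p k n \<nu> \<rho> \<beta> \<le> exp (- (\<eta> / 2) * ln (real p)) + exp (- (\<eta> / 4) * ln (real k))
     + exp (- (\<xi>' - \<xi>) * ln (real p)) + exp (- ln (real k))"
proof -
  define \<mu> where "\<mu> = real n * \<nu> * exp (- \<nu>) / real k"
  define \<delta> where "\<delta> = \<beta>' - \<beta>"
  have d: "0 < \<delta>" using b' by (simp add: \<delta>_def)
  have mu0: "0 \<le> \<mu>" using assms by (simp add: \<mu>_def)
  have lk0: "0 \<le> ln (real k)" using k by simp
  have H1: "\<mu> * (1 - \<rho>) \<ge> (1 + \<eta>) * (1 - \<xi>) * ln (real p)"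
    and H2: "\<mu> * D_gamma 1 \<beta> \<ge> (1 + \<eta>) * ln (real k)"
    and H3: "\<mu> * \<rho> * D_gamma 1 (\<beta> / \<rho>) \<ge> (1 + \<eta>) * \<xi> * ln (real p)"
    using hyps_from_nDD[OF assms(3) assms(1) assms(4) assms(5) k(1) assms(6) assms(8) n] by (simp_all add: \<mu>_def)
  have H2': "\<mu> * D_gamma 1 \<beta>' \<ge> (1 + \<eta> / 2) * ln (real k)"
  proof -
    have "\<mu> * D_gamma 1 \<beta>' \<ge> \<mu> * (((1 + \<eta> / 2) / (1 + \<eta>)) * D_gamma 1 \<beta>)"
      using b'(3) mu0 by (intro mult_left_mono) auto
    also have "\<mu> * (((1 + \<eta> / 2) / (1 + \<eta>)) * D_gamma 1 \<beta>) = ((1 + \<eta> / 2) / (1 + \<eta>)) * (\<mu> * D_gamma 1 \<beta>)" by simp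
    also have "\<dots> \<ge> ((1 + \<eta> / 2) / (1 + \<eta>)) * ((1 + \<eta>) * ln (real k))"
      using H2 assms by (intro mult_left_mono) auto
    also have "((1 + \<eta> / 2) / (1 + \<eta>)) * ((1 + \<eta>) * ln (real k)) = (1 + \<eta> / 2) * ln (real k)"
      using assms by (simp add: field_simps)
    finally show ?thesis .
  qed
  have Hmu: "\<mu> \<ge> ln (real k)"
  proof -
    have "\<mu> * D_gamma 1 \<beta> \<le> \<mu> * 1" using D1_le1[of \<beta>] assms mu0 by (intro mult_left_mono) auto
    moreover have "(1 + \<eta>) * ln (real k) \<ge> ln (real k)" using lk0 assms by (simp add: algebra_simps)
    ultimately show ?thesis using H2 by linarith
  qed
  have Dp: "0 < D_gamma 1 \<beta>'" using b' assms by (intro D1_pos) auto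
  have x: "0 \<le> \<nu> / real k" "\<nu> / real k \<le> 1" using k assms by auto
  have Mpos: "0 < real p powr \<xi>'" using p by simp
  have "dd_error_prob p k n \<nu> \<rho> \<beta> \<le>
     real p * ((1 - (\<nu> / real k) * (1 - \<nu> / real k) ^ k + (\<nu> / real k) * (1 - \<nu> / real k) ^ k * \<rho> * (\<beta> / \<rho>)) ^ n
        / (\<beta> / \<rho>) powr (\<beta> * real n * \<nu> * exp (- \<nu>) / real k))
   + real k * ((1 - (\<nu> / real k) * (1 - \<nu> / real k) ^ (k - 1) + (\<nu> / real k) * (1 - \<nu> / real k) ^ (k - 1) * \<beta>') ^ n
        / \<beta>' powr (\<beta>' * (real n * \<nu> * exp (- \<nu>) / real k)))
   + real p * (1 - (\<nu> / real k) * (1 - \<nu> / real k) ^ k * (1 - \<rho>)) ^ n / real p powr \<xi>'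
   + real k * ((1 - \<nu> / real k + (\<nu> / real k) * (1 + (exp (4 / \<delta>) - 1) * (real p powr \<xi>') * (\<nu> / real k))) ^ n
        / exp (4 / \<delta>) powr (\<delta> * (real n * \<nu> * exp (- \<nu>) / real k)))"
  proof (rule err_le_sum)
    show "1 \<le> k" "k \<le> p" by (fact k)+
    show "0 \<le> \<nu> / real k" "\<nu> / real k \<le> 1" by (fact x)+
    show "0 \<le> \<rho>" "\<rho> \<le> 1" using assms by auto
    show "1 \<le> \<beta> / \<rho>" using assms by simp
    show "0 < \<beta>'" "\<beta>' \<le> 1" using assms b' by auto
    show "1 \<le> exp (4 / \<delta>)" using d by simp
    show "0 < real p powr \<xi>'" by (fact Mpos)
    show "\<beta> * real n * \<nu> * exp (- \<nu>) / real k
      \<le> \<beta>' * (real n * \<nu> * exp (- \<nu>) / real k) - \<delta> * (real n * \<nu> * exp (- \<nu>) / real k)"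
    proof -
      define Z where "Z = real n * \<nu> * exp (- \<nu>) / real k"
      have e: "\<beta> * real n * \<nu> * exp (- \<nu>) / real k = \<beta> * Z" by (simp add: Z_def)
      have "\<beta> * Z \<le> \<beta>' * Z - \<delta> * Z" by (simp add: \<delta>_def left_diff_distrib)
      then show ?thesis unfolding e Z_def[symmetric] .
    qed
  qed
  also have "\<dots> \<le> exp (- (\<eta> / 2) * ln (real p)) + exp (- (\<eta> / 4) * ln (real k))
     + exp (- (\<xi>' - \<xi>) * ln (real p)) + exp (- ln (real k))"
  proof (intro add_mono)
    show "real p * ((1 - (\<nu> / real k) * (1 - \<nu> / real k) ^ k + (\<nu> / real k) * (1 - \<nu> / real k) ^ k * \<rho> * (\<beta> / \<rho>)) ^ n
        / (\<beta> / \<rho>) powr (\<beta> * real n * \<nu> * exp (- \<nu>) / real k)) \<le> exp (- (\<eta> / 2) * ln (real p))"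
      by (rule partA) (use assms H1 H3 H4 in \<open>auto simp: \<mu>_def\<close>)
    show "real k * ((1 - (\<nu> / real k) * (1 - \<nu> / real k) ^ (k - 1) + (\<nu> / real k) * (1 - \<nu> / real k) ^ (k - 1) * \<beta>') ^ n
        / \<beta>' powr (\<beta>' * (real n * \<nu> * exp (- \<nu>) / real k))) \<le> exp (- (\<eta> / 4) * ln (real k))"
      by (rule partC) (use assms b' H2' H5 Dp in \<open>auto simp: \<mu>_def\<close>)
    show "real p * (1 - (\<nu> / real k) * (1 - \<nu> / real k) ^ k * (1 - \<rho>)) ^ n / real p powr \<xi>'
        \<le> exp (- (\<xi>' - \<xi>) * ln (real p))"
    proof (rule partW)
      show "1 \<le> exp (- 2 * \<nu>\<^sup>2 / real k) * (1 + \<eta>)" using H4 assms by linarith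
    qed (use assms H1 in \<open>auto simp: \<mu>_def\<close>)
    show "real k * ((1 - \<nu> / real k + (\<nu> / real k) * (1 + (exp (4 / \<delta>) - 1) * (real p powr \<xi>') * (\<nu> / real k))) ^ n
        / exp (4 / \<delta>) powr (\<delta> * (real n * \<nu> * exp (- \<nu>) / real k))) \<le> exp (- ln (real k))"
      by (rule partI) (use assms d H6 Hmu in \<open>auto simp: \<mu>_def \<delta>_def\<close>)
  qed
  finally show ?thesis .
qed

theorem theorem3:
  fixes \<rho> \<theta> \<nu> \<beta> \<xi> \<eta> :: real and k n :: "nat \<Rightarrow> nat"
  assumes "0 < \<rho>" "\<rho> < 1" "0 < \<theta>" "\<theta> < 1" "0 < \<nu>"
    and "\<rho> < \<beta>" "\<beta> < 1" "0 < \<xi>" "\<xi> < \<theta>" "0 < \<eta>"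
    and "(\<lambda>p. real (k p)) \<in> \<Theta>(\<lambda>p. real p powr \<theta>)"
    and "\<forall>\<^sub>F p in at_top. real (n p) \<ge> (1 + \<eta>) * n_DD p (k p) \<nu> \<rho> \<beta> \<xi>"
  shows "(\<lambda>p. dd_error_prob p (k p) (n p) \<nu> \<rho> \<beta>) \<longlonglongrightarrow> 0"
proof -
  define \<tau> where "\<tau> = (1 + \<eta> / 2) / (1 + \<eta>)"
  have tau: "\<tau> < 1" using assms by (simp add: \<tau>_def field_simps)
  obtain \<beta>' where b': "\<beta> < \<beta>'" "\<beta>' < 1" "D_gamma 1 \<beta>' > \<tau> * D_gamma 1 \<beta>"
    using exists_beta'[OF _ assms(7) tau] assms by auto
  define \<xi>' where "\<xi>' = (\<xi> + \<theta>) / 2"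
  have xi': "\<xi> < \<xi>'" "\<xi>' < \<theta>" using assms by (auto simp: \<xi>'_def)
  define \<gamma> where "\<gamma> p = exp (- 2 * \<nu>\<^sup>2 / real (k p))" for p
  define C where "C = (exp (4 / (\<beta>' - \<beta>)) - 1) * \<nu> * exp \<nu>"
  have C0: "0 \<le> C" using b' assms by (simp add: C_def)
  have Dp: "0 < D_gamma 1 \<beta>'" using b' assms by (intro D1_pos) auto
  have kO: "(\<lambda>p. real (k p)) \<in> O(\<lambda>p. real p powr \<theta>)" and kOm: "(\<lambda>p. real (k p)) \<in> \<Omega>(\<lambda>p. real p powr \<theta>)"
    using assms(11) by auto
  obtain c2 where c2: "c2 > 0" "\<forall>\<^sub>F p in at_top. norm (real (k p)) \<le> c2 * norm (real p powr \<theta>)"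
    using landau_o.bigE[OF kO] by blast
  obtain c1 where c1: "c1 > 0" "\<forall>\<^sub>F p in at_top. norm (real (k p)) \<ge> c1 * norm (real p powr \<theta>)"
    using landau_omega.bigE[OF kOm] by blast
  have evk: "\<forall>\<^sub>F p in at_top. c1 * real p powr \<theta> \<le> real (k p) \<and> real (k p) \<le> c2 * real p powr \<theta>"
    using c1(2) c2(2) by eventually_elim auto
  have rp: "filterlim (\<lambda>p. real p) at_top sequentially" by (rule filterlim_real_sequentially)
  have pth: "filterlim (\<lambda>p. c1 * real p powr \<theta>) at_top sequentially"
    by (rule filterlim_tendsto_pos_mult_at_top[OF tendsto_const c1(1)])
       (rule filterlim_compose[OF powr_at_top_mine[OF assms(3)] rp])
  have kinf: "filterlim (\<lambda>p. real (k p)) at_top sequentially"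
    by (rule filterlim_at_top_mono[OF pth]) (use evk in \<open>eventually_elim, auto\<close>)
  have lninf: "filterlim (\<lambda>p. ln (real p)) at_top sequentially"
    by (rule filterlim_compose[OF ln_at_top rp])
  have lnkinf: "filterlim (\<lambda>p. ln (real (k p))) at_top sequentially"
    by (rule filterlim_compose[OF ln_at_top kinf])
  have ev_k1: "\<forall>\<^sub>F p in at_top. real (k p) \<ge> max 1 (2 * \<nu>)"
  proof -
    from kinf have "\<forall>Z. \<forall>\<^sub>F p in sequentially. Z \<le> real (k p)" by (simp add: filterlim_at_top)
    then show ?thesis by blast
  qed
  have ev_p: "\<forall>\<^sub>F p in at_top. (1::nat) \<le> p" by (rule eventually_ge_at_top)
  have ev_kp: "\<forall>\<^sub>F p in at_top. real (k p) \<le> real p"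
  proof -
    have "((\<lambda>p. real p powr (\<theta> - 1)) \<longlongrightarrow> 0) sequentially"
      using assms by (intro tendsto_neg_powr rp) auto
    then have "((\<lambda>p. c2 * real p powr (\<theta> - 1)) \<longlongrightarrow> c2 * 0) sequentially" by (intro tendsto_mult tendsto_const)
    then have "\<forall>\<^sub>F p in at_top. c2 * real p powr (\<theta> - 1) < 1" by (intro order_tendstoD) auto
    then show ?thesis using evk ev_p
    proof eventually_elim
      case (elim p)
      have "c2 * real p powr \<theta> = (c2 * real p powr (\<theta> - 1)) * real p"
        using elim(3) by (simp add: powr_diff field_simps)
      also have "\<dots> \<le> 1 * real p" using elim(1) by (intro mult_right_mono) auto
      finally show ?case using elim(2) by simp
    qed
  qed
  have glim: "(\<gamma> \<longlongrightarrow> 1) sequentially"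
  proof -
    have "((\<lambda>p. - 2 * \<nu>\<^sup>2 / real (k p)) \<longlongrightarrow> 0) sequentially"
      by (intro tendsto_divide_0[OF tendsto_const] filterlim_at_top_imp_at_infinity kinf)
    then have "((\<lambda>p. exp (- 2 * \<nu>\<^sup>2 / real (k p))) \<longlongrightarrow> exp 0) sequentially" by (intro tendsto_exp)
    then show ?thesis unfolding \<gamma>_def[abs_def] by simp
  qed
  have ev_g1: "\<forall>\<^sub>F p in at_top. \<gamma> p * (1 + \<eta>) \<ge> 1 + \<eta> / 2"
  proof -
    have "((\<lambda>p. \<gamma> p * (1 + \<eta>)) \<longlongrightarrow> 1 * (1 + \<eta>)) sequentially" by (intro tendsto_mult glim tendsto_const)
    moreover have "1 + \<eta> / 2 < 1 * (1 + \<eta>)" using assms by simp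
    ultimately have "\<forall>\<^sub>F p in at_top. 1 + \<eta> / 2 < \<gamma> p * (1 + \<eta>)" by (rule order_tendstoD)
    then show ?thesis by eventually_elim auto
  qed
  have ev_g2: "\<forall>\<^sub>F p in at_top. 1 - \<gamma> p \<le> D_gamma 1 \<beta>' * ((\<eta> / 4) / (1 + \<eta> / 2))"
  proof -
    have "((\<lambda>p. 1 - \<gamma> p) \<longlongrightarrow> 1 - 1) sequentially" by (intro tendsto_diff glim tendsto_const)
    moreover have "1 - 1 < D_gamma 1 \<beta>' * ((\<eta> / 4) / (1 + \<eta> / 2))" using assms Dp by simp
    ultimately have "\<forall>\<^sub>F p in at_top. 1 - \<gamma> p < D_gamma 1 \<beta>' * ((\<eta> / 4) / (1 + \<eta> / 2))" by (rule order_tendstoD)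
    then show ?thesis by eventually_elim auto
  qed
  have ev_M: "\<forall>\<^sub>F p in at_top. C * (real p powr \<xi>') / real (k p) \<le> 2"
  proof -
    have "((\<lambda>p. real p powr (\<xi>' - \<theta>)) \<longlongrightarrow> 0) sequentially"
      using xi' by (intro tendsto_neg_powr rp) auto
    then have "((\<lambda>p. C / c1 * real p powr (\<xi>' - \<theta>)) \<longlongrightarrow> C / c1 * 0) sequentially" by (intro tendsto_mult tendsto_const)
    then have "\<forall>\<^sub>F p in at_top. C / c1 * real p powr (\<xi>' - \<theta>) < 2" by (intro order_tendstoD) auto
    then show ?thesis using evk ev_p
    proof eventually_elim
      case (elim p)
      have pp: "0 < real p powr \<theta>" using elim(3) by simp
      have kpos: "0 < real (k p)" using elim(2) pp c1 by (smt (verit) mult_pos_pos)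
      have "C * (real p powr \<xi>') / real (k p) \<le> C * (real p powr \<xi>') / (c1 * real p powr \<theta>)"
        using elim(2) kpos pp c1 C0 by (intro divide_left_mono mult_nonneg_nonneg) auto
      also have "\<dots> = C / c1 * real p powr (\<xi>' - \<theta>)"
        using elim(3) c1 by (simp add: powr_diff field_simps)
      finally show ?case using elim(1) by simp
    qed
  qed
  define U where "U p = exp (- (\<eta> / 2) * ln (real p)) + exp (- (\<eta> / 4) * ln (real (k p)))
     + exp (- (\<xi>' - \<xi>) * ln (real p)) + exp (- 1 * ln (real (k p)))" for p
  have Ulim: "U \<longlonglongrightarrow> 0"
  proof -
    have "((\<lambda>p. exp (- (\<eta> / 2) * ln (real p)) + exp (- (\<eta> / 4) * ln (real (k p)))
     + exp (- (\<xi>' - \<xi>) * ln (real p)) + exp (- 1 * ln (real (k p)))) \<longlongrightarrow> 0 + 0 + 0 + 0) sequentially"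
      using assms xi' by (intro tendsto_add exp_neg_lim lninf lnkinf) auto
    then show ?thesis unfolding U_def[abs_def] by simp
  qed
  have ev_bound: "\<forall>\<^sub>F p in at_top. dd_error_prob p (k p) (n p) \<nu> \<rho> \<beta> \<le> U p"
    using assms(12) ev_k1 ev_p ev_kp ev_g1 ev_g2 ev_M
  proof eventually_elim
    case (elim p)
    have k1: "1 \<le> k p" using elim(2) by simp
    have kn: "\<nu> / real (k p) \<le> 1/2" using elim(2) assms k1 by (simp add: field_simps)
    have "dd_error_prob p (k p) (n p) \<nu> \<rho> \<beta> \<le> exp (- (\<eta> / 2) * ln (real p)) + exp (- (\<eta> / 4) * ln (real (k p)))
     + exp (- (\<xi>' - \<xi>) * ln (real p)) + exp (- ln (real (k p)))"
    proof (rule per_p_bound)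
      show "D_gamma 1 \<beta>' > ((1 + \<eta> / 2) / (1 + \<eta>)) * D_gamma 1 \<beta>" using b'(3) by (simp add: \<tau>_def)
      show "k p \<le> p" using elim(4) by simp
      show "(exp (4 / (\<beta>' - \<beta>)) - 1) * \<nu> * exp \<nu> * (real p powr \<xi>') / real (k p) \<le> 2"
        using elim(7) by (simp add: C_def)
    qed (use assms b' k1 kn elim in \<open>auto simp: \<gamma>_def\<close>)
    then show ?case by (simp add: U_def)
  qed
  have ev_nn: "\<forall>\<^sub>F p in at_top. 0 \<le> dd_error_prob p (k p) (n p) \<nu> \<rho> \<beta>"
    by (simp add: dd_error_prob_def)
  show ?thesis
    by (rule tendsto_sandwich[OF ev_nn ev_bound tendsto_const Ulim])
qed

end
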